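(* Assume the synchronous bandit is unichain and strictly indexable (states labeled $\nu_1>\dots>\nu_d$), and let $\rho(\mathbf m)$ be the instantaneous bandit-averaged reward of WIP when the $N$-bandit system is in configuration $\mathbf m$. Then (i) for all $\mathbf m\in\Delta^d$, $$\rho(\mathbf m)=\sum_{i=1}^{s(\mathbf m)-1} m_i R^1_{i} + \Big(\alpha-\sum_{i=1}^{s(\mathbf m)-1}m_i\Big)R^1_{s(\mathbf m)} + \Big(\sum_{i=1}^{s(\mathbf m)}m_i - \alpha\Big)R^0_{s(\mathbf m)} + \sum_{i=s(\mathbf m)+1}^{d} m_i R^0_{i},$$ so $\rho$ is affine on each zone $\mathcal Z_i=\{\mathbf m: s(\mathbf m)=i\}$; and (ii) $\rho(\mathbf m^* )=V^{(1)}_{\mathrm{rel}}(\alpha)$, where $\mathbf m^*$ is the unique fixed point of $\phi$.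
   Context: Synchronous restless bandit model: $d\times d$ stochastic matrices $\mathbf P^0,\mathbf P^1$, rewards $\mathbf R^0,\mathbf R^1\in\mathbb R^d$, $\alpha\in(0,1)$; $N$ bandits with $\alpha N\in\mathbb N$ evolve independently given actions with $\mathbb P(S_n(t+1)=j\mid S_n(t)=i,a_n(t)=a)=P^a_{ij}$, reward $R^a_i$ per bandit per step. $V^{(1)}_{\mathrm{rel}}(\alpha)$ is the supremum over stationary Markov single-bandit policies of the long-run average expected reward subject to the long-run fraction of active time being $\alpha$. Unichain: under every policy a single bandit's states form one recurrent class. Indexability/Whittle index: the subsidy-$\nu$ problem is the single-bandit MDP where action $0$ in state $i$ earns $R^0_i+\nu$ and action $1$ earns $R^1_i$ (average reward); $\omega(\nu)$ the set of states where some optimal policy is passive; indexable if $\omega(\nu)\subseteq\omega(\nu')$ for $\nu\le\nu'$; $\nu_i=\inf\{\nu:i\in\omega(\nu)\}$; strictly indexable: distinct indices. WIP activates at each step the $\alpha N$ bandits with highest indices. $\Delta^d=\{\mathbf m\in[0,1]^d:\sum m_i=1\}$; configuration = vector of fractions of bandits in each state; $s(\mathbf m)$ the unique $s$ with $\sum_{i<s}m_i\le\alpha<\sum_{i\le s}m_i$; $\phi_j(\mathbf m)=\sum_{i=1}^{s(\mathbf m)-1} m_i P^1_{ij} + (\alpha-\sum_{i=1}^{s(\mathbf m)-1}m_i)P^1_{s(\mathbf m)j} + (\sum_{i=1}^{s(\mathbf m)}m_i - \alpha)P^0_{s(\mathbf m)j} + \sum_{i=s(\mathbf m)+1}^{d}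 m_i P^0_{ij}$, which has a unique fixed point $\mathbf m^*$ under these assumptions. *)

theory Defs
  imports Complex_Main
begin

text \<open>States of a single bandit are labelled 1..d. Matrices are functions
  nat => nat => real, vectors nat => real; only indices in {1..d} matter.\<close>

definition stochastic :: "nat \<Rightarrow> (nat \<Rightarrow> nat \<Rightarrow> real) \<Rightarrow> bool" where
  "stochastic d P \<longleftrightarrow> (\<forall>i\<in>{1..d}. \<forall>j\<in>{1..d}. 0 \<le> P i j) \<and>
                       (\<forall>i\<in>{1..d}. (\<Sum>j=1..d. P i j) = 1)"

fun mpow :: "nat \<Rightarrow> (nat \<Rightarrow> nat \<Rightarrow> real) \<Rightarrow> nat \<Rightarrow> nat \<Rightarrow> nat \<Rightarrow> real" where
  "mpow d Q 0 i j = (if i = j then 1 else 0)"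
| "mpow d Q (Suc t) i j = (\<Sum>k=1..d. mpow d Q t i k * Q k j)"

text \<open>Stationary Markov (randomised) single-bandit policy: pol i is the
  probability of being active in state i.\<close>
definition policy :: "nat \<Rightarrow> (nat \<Rightarrow> real) \<Rightarrow> bool" where
  "policy d pol \<longleftrightarrow> (\<forall>i\<in>{1..d}. 0 \<le> pol i \<and> pol i \<le> 1)"

definition pol_matrix :: "(nat \<Rightarrow> nat \<Rightarrow> real) \<Rightarrow> (nat \<Rightarrow> nat \<Rightarrow> real) \<Rightarrow> (nat \<Rightarrow> real)
    \<Rightarrow> nat \<Rightarrow> nat \<Rightarrow> real" where
  "pol_matrix P0 P1 pol i j = (1 - pol i) * P0 i j + pol i * P1 i j"

definition pol_reward :: "(nat \<Rightarrow> real) \<Rightarrow> (nat \<Rightarrow> real) \<Rightarrow> (nat \<Rightarrow> real) \<Rightarrow> nat \<Rightarrow> real" where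
  "pol_reward R0 R1 pol i = (1 - pol i) * R0 i + pol i * R1 i"

definition reach :: "nat \<Rightarrow> (nat \<Rightarrow> nat \<Rightarrow> real) \<Rightarrow> nat \<Rightarrow> nat \<Rightarrow> bool" where
  "reach d Q i j \<longleftrightarrow> (\<exists>t. mpow d Q t i j > 0)"

definition recurrent :: "nat \<Rightarrow> (nat \<Rightarrow> nat \<Rightarrow> real) \<Rightarrow> nat \<Rightarrow> bool" where
  "recurrent d Q i \<longleftrightarrow> i \<in> {1..d} \<and> (\<forall>j\<in>{1..d}. reach d Q i j \<longrightarrow> reach d Q j i)"

definition single_recurrent_class :: "nat \<Rightarrow> (nat \<Rightarrow> nat \<Rightarrow> real) \<Rightarrow> bool" where
  "single_recurrent_class d Q \<longleftrightarrow>
     (\<forall>i j. recurrent d Q i \<and> recurrent d Q j \<longrightarrow> reach d Q i j)"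

definition unichain :: "nat \<Rightarrow> (nat \<Rightarrow> nat \<Rightarrow> real) \<Rightarrow> (nat \<Rightarrow> nat \<Rightarrow> real) \<Rightarrow> bool" where
  "unichain d P0 P1 \<longleftrightarrow>
     (\<forall>pol. policy d pol \<longrightarrow> single_recurrent_class d (pol_matrix P0 P1 pol))"

definition longrun_avg :: "nat \<Rightarrow> (nat \<Rightarrow> nat \<Rightarrow> real) \<Rightarrow> (nat \<Rightarrow> real) \<Rightarrow> nat \<Rightarrow> real" where
  "longrun_avg d Q f i0 =
     lim (\<lambda>T. (\<Sum>t<T. \<Sum>j=1..d. mpow d Q t i0 j * f j) / real T)"

definition V_rel :: "nat \<Rightarrow> (nat \<Rightarrow> nat \<Rightarrow> real) \<Rightarrow> (nat \<Rightarrow> nat \<Rightarrow> real) \<Rightarrow>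
    (nat \<Rightarrow> real) \<Rightarrow> (nat \<Rightarrow> real) \<Rightarrow> real \<Rightarrow> real" where
  "V_rel d P0 P1 R0 R1 alpha =
     Sup {longrun_avg d (pol_matrix P0 P1 pol) (pol_reward R0 R1 pol) i0 | pol i0.
            policy d pol \<and> i0 \<in> {1..d} \<and>
            longrun_avg d (pol_matrix P0 P1 pol) pol i0 = alpha}"

definition bellman_sol :: "nat \<Rightarrow> (nat \<Rightarrow> nat \<Rightarrow> real) \<Rightarrow> (nat \<Rightarrow> nat \<Rightarrow> real) \<Rightarrow>
    (nat \<Rightarrow> real) \<Rightarrow> (nat \<Rightarrow> real) \<Rightarrow> real \<Rightarrow> real \<Rightarrow> (nat \<Rightarrow> real) \<Rightarrow> bool" where
  "bellman_sol d P0 P1 R0 R1 nu g h \<longleftrightarrow>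
     (\<forall>i\<in>{1..d}. g + h i = max (R0 i + nu + (\<Sum>j=1..d. P0 i j * h j))
                                 (R1 i + (\<Sum>j=1..d. P1 i j * h j)))"

definition omega :: "nat \<Rightarrow> (nat \<Rightarrow> nat \<Rightarrow> real) \<Rightarrow> (nat \<Rightarrow> nat \<Rightarrow> real) \<Rightarrow>
    (nat \<Rightarrow> real) \<Rightarrow> (nat \<Rightarrow> real) \<Rightarrow> real \<Rightarrow> nat set" where
  "omega d P0 P1 R0 R1 nu = {i \<in> {1..d}. \<exists>g h. bellman_sol d P0 P1 R0 R1 nu g h \<and>
       R0 i + nu + (\<Sum>j=1..d. P0 i j * h j) \<ge> R1 i + (\<Sum>j=1..d. P1 i j * h j)}"

definition indexable :: "nat \<Rightarrow> (nat \<Rightarrow> nat \<Rightarrow> real) \<Rightarrow> (nat \<Rightarrow> nat \<Rightarrow> real) \<Rightarrow>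
    (nat \<Rightarrow> real) \<Rightarrow> (nat \<Rightarrow> real) \<Rightarrow> bool" where
  "indexable d P0 P1 R0 R1 \<longleftrightarrow>
     (\<forall>nu nu'. nu \<le> nu' \<longrightarrow> omega d P0 P1 R0 R1 nu \<subseteq> omega d P0 P1 R0 R1 nu')"

definition whittle_index :: "nat \<Rightarrow> (nat \<Rightarrow> nat \<Rightarrow> real) \<Rightarrow> (nat \<Rightarrow> nat \<Rightarrow> real) \<Rightarrow>
    (nat \<Rightarrow> real) \<Rightarrow> (nat \<Rightarrow> real) \<Rightarrow> nat \<Rightarrow> real" where
  "whittle_index d P0 P1 R0 R1 i = Inf {nu. i \<in> omega d P0 P1 R0 R1 nu}"

definition strictly_indexable :: "nat \<Rightarrow> (nat \<Rightarrow> nat \<Rightarrow> real) \<Rightarrow> (nat \<Rightarrow> nat \<Rightarrow> real) \<Rightarrow>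
    (nat \<Rightarrow> real) \<Rightarrow> (nat \<Rightarrow> real) \<Rightarrow> bool" where
  "strictly_indexable d P0 P1 R0 R1 \<longleftrightarrow> indexable d P0 P1 R0 R1 \<and>
     inj_on (whittle_index d P0 P1 R0 R1) {1..d}"

text \<open>Configurations (fractions of bandits in each state).\<close>
definition simplex :: "nat \<Rightarrow> (nat \<Rightarrow> real) set" where
  "simplex d = {m. (\<forall>i\<in>{1..d}. 0 \<le> m i \<and> m i \<le> 1) \<and> (\<Sum>i=1..d. m i) = 1}"

definition s_of :: "nat \<Rightarrow> real \<Rightarrow> (nat \<Rightarrow> real) \<Rightarrow> nat" where
  "s_of d alpha m = (THE s. s \<in> {1..d} \<and> (\<Sum>i=1..<s. m i) \<le> alpha \<and> alpha < (\<Sum>i=1..s. m i))"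

definition phi :: "nat \<Rightarrow> (nat \<Rightarrow> nat \<Rightarrow> real) \<Rightarrow> (nat \<Rightarrow> nat \<Rightarrow> real) \<Rightarrow> real \<Rightarrow>
    (nat \<Rightarrow> real) \<Rightarrow> nat \<Rightarrow> real" where
  "phi d P0 P1 alpha m j = (let s = s_of d alpha m in
      (\<Sum>i=1..<s. m i * P1 i j) + (alpha - (\<Sum>i=1..<s. m i)) * P1 s j
      + ((\<Sum>i=1..s. m i) - alpha) * P0 s j + (\<Sum>i=Suc s..d. m i * P0 i j))"

text \<open>WIP in configuration m: activates (a fraction alpha of the bandits) the bandits
  with the highest indices nu; wip_active gives the fraction of all bandits that are
  in state i and active.\<close>
definition wip_active :: "nat \<Rightarrow> (nat \<Rightarrow> real) \<Rightarrow> real \<Rightarrow> (nat \<Rightarrow> real) \<Rightarrow> nat \<Rightarrow> real" where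
  "wip_active d nu alpha m i =
     min (m i) (max 0 (alpha - (\<Sum>j\<in>{j\<in>{1..d}. nu j > nu i}. m j)))"

definition wip_reward :: "nat \<Rightarrow> (nat \<Rightarrow> real) \<Rightarrow> (nat \<Rightarrow> real) \<Rightarrow> (nat \<Rightarrow> real) \<Rightarrow> real \<Rightarrow>
    (nat \<Rightarrow> real) \<Rightarrow> real" where
  "wip_reward d nu R0 R1 alpha m =
     (\<Sum>i=1..d. wip_active d nu alpha m i * R1 i + (m i - wip_active d nu alpha m i) * R0 i)"

end

theory Submission
  imports Defs "Jordan_Normal_Form.Determinant"
begin

section \<open>Basic Markov chain facts\<close>

definition mv :: "nat \<Rightarrow> (nat \<Rightarrow> nat \<Rightarrow> real) \<Rightarrow> (nat \<Rightarrow> real) \<Rightarrow> nat \<Rightarrow> real" where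
  "mv d Q h i = (\<Sum>j=1..d. Q i j * h j)"

definition closedset :: "nat \<Rightarrow> (nat \<Rightarrow> nat \<Rightarrow> real) \<Rightarrow> nat set \<Rightarrow> bool" where
  "closedset d Q C \<longleftrightarrow> C \<subseteq> {1..d} \<and> (\<forall>i\<in>C. \<forall>j\<in>{1..d}. Q i j > 0 \<longrightarrow> j \<in> C)"

lemma stochD:
  assumes "stochastic d Q"
  shows "\<And>i j. i \<in> {1..d} \<Longrightarrow> j \<in> {1..d} \<Longrightarrow> 0 \<le> Q i j"
    and "\<And>i. i \<in> {1..d} \<Longrightarrow> (\<Sum>j=1..d. Q i j) = 1"
  using assms unfolding stochastic_def by auto

lemma sum_delta_l: "finite A \<Longrightarrow> (\<Sum>k\<in>A. (if i = k then 1 else 0) * (f k::real)) = (if i \<in> A then f i else 0)"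
proof -
  assume A: "finite A"
  have "(\<Sum>k\<in>A. (if i = k then 1 else 0) * (f k::real)) = (\<Sum>k\<in>A. (if i = k then f k else 0))"
    by (rule sum.cong) auto
  then show ?thesis using A by (simp add: sum.delta)
qed

lemma sum_delta_r: "finite A \<Longrightarrow> (\<Sum>k\<in>A. (f k::real) * (if k = i then 1 else 0)) = (if i \<in> A then f i else 0)"
proof -
  assume A: "finite A"
  have "(\<Sum>k\<in>A. (f k::real) * (if k = i then 1 else 0)) = (\<Sum>k\<in>A. (if k = i then f k else 0))"
    by (rule sum.cong) auto
  then show ?thesis using A by (simp add: sum.delta')
qed

lemma mpow_nonneg:
  assumes "stochastic d Q" "j \<in> {1..d}"
  shows "0 \<le> mpow d Q t i j"
  using assms(2)
proof (induction t arbitrary: j)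
  case 0 then show ?case by simp
next
  case (Suc t)
  show ?case
    using Suc.IH stochD(1)[OF assms(1) _ Suc.prems] by (auto intro!: sum_nonneg mult_nonneg_nonneg)
qed

lemma mpow_rowsum:
  assumes "stochastic d Q" "i \<in> {1..d}"
  shows "(\<Sum>j=1..d. mpow d Q t i j) = 1"
proof (induction t)
  case 0 then show ?case using assms(2) by (simp add: sum.delta)
next
  case (Suc t)
  have "(\<Sum>j=1..d. mpow d Q (Suc t) i j) = (\<Sum>j=1..d. \<Sum>k=1..d. mpow d Q t i k * Q k j)"
    by simp
  also have "\<dots> = (\<Sum>k=1..d. mpow d Q t i k * (\<Sum>j=1..d. Q k j))"
    by (subst sum.swap) (simp add: sum_distrib_left)
  also have "\<dots> = (\<Sum>k=1..d. mpow d Q t i k)"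
  proof (rule sum.cong)
    fix k assume "k \<in> {1..d}"
    then show "mpow d Q t i k * (\<Sum>j=1..d. Q k j) = mpow d Q t i k"
      using stochD(2)[OF assms(1)] by simp
  qed simp
  finally show ?case using Suc by simp
qed

lemma mpow_le1:
  assumes "stochastic d Q" "i \<in> {1..d}" "j \<in> {1..d}"
  shows "mpow d Q t i j \<le> 1"
proof -
  have "mpow d Q t i j \<le> (\<Sum>j=1..d. mpow d Q t i j)"
    by (rule member_le_sum) (use assms mpow_nonneg in auto)
  then show ?thesis using mpow_rowsum[OF assms(1,2)] by simp
qed

lemma mpow_add:
  assumes "k \<in> {1..d}"
  shows "mpow d Q (t + u) i k = (\<Sum>j=1..d. mpow d Q t i j * mpow d Q u j k)"
  using assms
proof (induction u arbitrary: k)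
  case 0
  then show ?case by (simp add: sum_delta_r)
next
  case (Suc u)
  have "mpow d Q (t + Suc u) i k = (\<Sum>l=1..d. mpow d Q (t+u) i l * Q l k)" by simp
  also have "\<dots> = (\<Sum>l=1..d. (\<Sum>j=1..d. mpow d Q t i j * mpow d Q u j l) * Q l k)"
    by (rule sum.cong) (auto simp: Suc.IH)
  also have "\<dots> = (\<Sum>j=1..d. mpow d Q t i j * (\<Sum>l=1..d. mpow d Q u j l * Q l k))"
    by (simp add: sum_distrib_left sum_distrib_right mult.assoc) (rule sum.swap)
  finally show ?case by simp
qed

lemma reach_refl: "reach d Q i i"
  unfolding reach_def by (rule exI[of _ 0]) simp

lemma mpow_one: "i \<in> {1..d} \<Longrightarrow> mpow d Q 1 i j = Q i j"
  by (simp add: sum_delta_l)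

lemma reach_step: "i \<in> {1..d} \<Longrightarrow> Q i j > 0 \<Longrightarrow> reach d Q i j"
  unfolding reach_def using mpow_one by metis

lemma reach_trans:
  assumes st: "stochastic d Q" and j: "j \<in> {1..d}" and k: "k \<in> {1..d}"
    and r1: "reach d Q i j" and r2: "reach d Q j k"
  shows "reach d Q i k"
proof -
  obtain t where t: "mpow d Q t i j > 0" using r1 unfolding reach_def by auto
  obtain u where u: "mpow d Q u j k > 0" using r2 unfolding reach_def by auto
  have "0 < mpow d Q t i j * mpow d Q u j k" using t u by simp
  also have "\<dots> \<le> (\<Sum>l=1..d. mpow d Q t i l * mpow d Q u l k)"
    by (rule member_le_sum) (use j k mpow_nonneg[OF st] in auto)
  also have "\<dots> = mpow d Q (t+u) i k" using mpow_add[OF k] by simp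
  finally show ?thesis unfolding reach_def by blast
qed

lemma sum_pos_ex:
  fixes f :: "nat \<Rightarrow> real"
  assumes "0 < sum f A"
  shows "\<exists>k\<in>A. 0 < f k"
proof (rule ccontr)
  assume "\<not> ?thesis"
  then have "sum f A \<le> 0" by (intro sum_nonpos) (auto simp: not_less)
  with assms show False by simp
qed

lemma closed_mpow:
  assumes st: "stochastic d Q" and C: "closedset d Q C" and i: "i \<in> C"
  shows "j \<in> {1..d} \<Longrightarrow> mpow d Q t i j > 0 \<Longrightarrow> j \<in> C"
proof (induction t arbitrary: j)
  case 0
  then show ?case using i by (simp split: if_splits)
next
  case (Suc t)
  from Suc.prems(2) obtain k where k: "k \<in> {1..d}" and pk: "0 < mpow d Q t i k * Q k j"
    using sum_pos_ex[of "\<lambda>k. mpow d Q t i k * Q k j" "{1..d}"] by auto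
  have "0 \<le> mpow d Q t i k" using mpow_nonneg[OF st k] .
  moreover have "0 \<le> Q k j" using stochD(1)[OF st k Suc.prems(1)] .
  ultimately have "mpow d Q t i k > 0" "Q k j > 0" using pk
    by (auto simp: zero_less_mult_iff)
  then have "k \<in> C" using Suc.IH k by auto
  then show ?case using C Suc.prems(1) \<open>Q k j > 0\<close> unfolding closedset_def by auto
qed

lemma closed_reach:
  assumes st: "stochastic d Q" and C: "closedset d Q C" and i: "i \<in> C"
    and j: "j \<in> {1..d}" and r: "reach d Q i j"
  shows "j \<in> C"
  using r closed_mpow[OF st C i j] unfolding reach_def by auto

lemma closed_has_recurrent:
  assumes st: "stochastic d Q" and C: "closedset d Q C" and ne: "C \<noteq> {}"
  shows "\<exists>w\<in>C. recurrent d Q w"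
proof -
  define Rc where "Rc i = {j\<in>{1..d}. reach d Q i j}" for i
  obtain i0 where "i0 \<in> C" using ne by auto
  obtain i where i: "i \<in> C" and imin: "\<And>j. j \<in> C \<Longrightarrow> card (Rc i) \<le> card (Rc j)"
    using ex_has_least_nat[of "\<lambda>i. i \<in> C" i0 "\<lambda>i. card (Rc i)"] \<open>i0 \<in> C\<close> by auto
  have id: "i \<in> {1..d}" using i C unfolding closedset_def by auto
  have "recurrent d Q i"
    unfolding recurrent_def
  proof (intro conjI ballI impI)
    show "i \<in> {1..d}" by fact
    fix j assume j: "j \<in> {1..d}" and rij: "reach d Q i j"
    have jC: "j \<in> C" using closed_reach[OF st C i j rij] .
    have sub: "Rc j \<subseteq> Rc i" unfolding Rc_def using reach_trans[OF st j _ rij] by auto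
    have "card (Rc i) \<le> card (Rc j)" using imin[OF jC] .
    moreover have "card (Rc j) \<le> card (Rc i)" using sub by (intro card_mono) (auto simp: Rc_def)
    ultimately have "Rc j = Rc i" using sub by (intro card_subset_eq) (auto simp: Rc_def)
    moreover have "i \<in> Rc i" using id reach_refl unfolding Rc_def by auto
    ultimately show "reach d Q j i" unfolding Rc_def by auto
  qed
  then show ?thesis using i by auto
qed

lemma agree_mpow:
  assumes st: "stochastic d Q" and C: "closedset d Q C"
    and agree: "\<And>i j. i \<in> C \<Longrightarrow> Q i j = Q' i j" and i: "i \<in> C"
  shows "j \<in> {1..d} \<Longrightarrow> mpow d Q t i j = mpow d Q' t i j"
proof (induction t arbitrary: j)
  case 0 then show ?case by simp
next
  case (Suc t)
  have "(\<Sum>k=1..d. mpow d Q t i k * Q k j) = (\<Sum>k=1..d. mpow d Q' t i k * Q' k j)"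
  proof (rule sum.cong)
    fix k assume k: "k \<in> {1..d}"
    show "mpow d Q t i k * Q k j = mpow d Q' t i k * Q' k j"
    proof (cases "k \<in> C")
      case True then show ?thesis using Suc.IH[OF k] agree by simp
    next
      case False
      then have "\<not> mpow d Q t i k > 0" using closed_mpow[OF st C i k] by auto
      then have "mpow d Q t i k = 0" using mpow_nonneg[OF st k, of t i] by simp
      then show ?thesis using Suc.IH[OF k] by simp
    qed
  qed simp
  then show ?case by simp
qed

lemma agree_reach:
  assumes st: "stochastic d Q" and C: "closedset d Q C"
    and agree: "\<And>i j. i \<in> C \<Longrightarrow> Q i j = Q' i j" and i: "i \<in> C" and j: "j \<in> {1..d}"
  shows "reach d Q i j \<longleftrightarrow> reach d Q' i j"
  unfolding reach_def using agree_mpow[OF st C agree i j] by simp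

lemma agree_recurrent:
  assumes st: "stochastic d Q" and C: "closedset d Q C"
    and agree: "\<And>i j. i \<in> C \<Longrightarrow> Q i j = Q' i j" and i: "i \<in> C"
  shows "recurrent d Q i \<longleftrightarrow> recurrent d Q' i"
proof -
  have iD: "i \<in> {1..d}" using i C unfolding closedset_def by auto
  have "\<forall>j\<in>{1..d}. (reach d Q i j \<longrightarrow> reach d Q j i) \<longleftrightarrow> (reach d Q' i j \<longrightarrow> reach d Q' j i)"
  proof
    fix j assume j: "j \<in> {1..d}"
    show "(reach d Q i j \<longrightarrow> reach d Q j i) \<longleftrightarrow> (reach d Q' i j \<longrightarrow> reach d Q' j i)"
    proof (cases "reach d Q i j")
      case True
      then have "j \<in> C" using closed_reach[OF st C i j] by auto
      then show ?thesis using agree_reach[OF st C agree i j] agree_reach[OF st C agree _ iD] by auto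
    next
      case False
      then show ?thesis using agree_reach[OF st C agree i j] by auto
    qed
  qed
  then show ?thesis unfolding recurrent_def using iD by auto
qed


lemma mv_neg: "mv d Q (\<lambda>j. - u j) i = - mv d Q u i"
  by (simp add: mv_def sum_negf)

lemma mv_diff: "mv d Q (\<lambda>j. u j - v j) i = mv d Q u i - mv d Q v i"
  by (simp add: mv_def right_diff_distrib sum_subtractf)

lemma mv_lin: "mv d Q (\<lambda>j. u j + c * v j) i = mv d Q u i + c * mv d Q v i"
  by (simp add: mv_def distrib_left sum.distrib sum_distrib_left mult.left_commute)

lemma mv_const:
  assumes "stochastic d Q" "i \<in> {1..d}"
  shows "mv d Q (\<lambda>j. u j + c) i = mv d Q u i + c"
proof -
  have "mv d Q (\<lambda>j. u j + c) i = mv d Q u i + c * (\<Sum>j=1..d. Q i j)"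
    by (simp add: mv_def distrib_left sum.distrib sum_distrib_left mult.commute)
  then show ?thesis using stochD(2)[OF assms] by simp
qed

section \<open>Minimum principle\<close>

lemma min_principle:
  assumes st: "stochastic d Q" and d: "1 \<le> d"
    and H: "\<And>i. i \<in> {1..d} \<Longrightarrow> mv d Q u i \<le> c + u i"
  shows "0 \<le> c"
    and "c \<le> 0 \<Longrightarrow> closedset d Q {i\<in>{1..d}. u i = Min (u ` {1..d})}"
    and "{i\<in>{1..d}. u i = Min (u ` {1..d})} \<noteq> {}"
proof -
  define mn where "mn = Min (u ` {1..d})"
  have fin: "finite (u ` {1..d})" and ne: "u ` {1..d} \<noteq> {}" using d by auto
  have "mn \<in> u ` {1..d}" unfolding mn_def using Min_in[OF fin ne] .
  then obtain i0 where i0: "i0 \<in> {1..d}" "u i0 = mn" by auto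
  have le: "\<And>j. j \<in> {1..d} \<Longrightarrow> mn \<le> u j" unfolding mn_def using fin by auto
  have mvge: "mn \<le> mv d Q u i" if i: "i \<in> {1..d}" for i
  proof -
    have "mn = (\<Sum>j=1..d. Q i j * mn)"
      using stochD(2)[OF st i] by (simp add: sum_distrib_right[symmetric])
    also have "\<dots> \<le> mv d Q u i" unfolding mv_def
      by (rule sum_mono) (use le stochD(1)[OF st i] in \<open>auto intro: mult_left_mono\<close>)
    finally show ?thesis .
  qed
  show "0 \<le> c" using mvge[OF i0(1)] H[OF i0(1)] i0(2) by simp
  show "{i\<in>{1..d}. u i = Min (u ` {1..d})} \<noteq> {}" using i0 unfolding mn_def by auto
  assume c0: "c \<le> 0"
  show "closedset d Q {i\<in>{1..d}. u i = Min (u ` {1..d})}"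
    unfolding closedset_def mn_def[symmetric]
  proof (intro conjI ballI impI)
    show "{i \<in> {1..d}. u i = mn} \<subseteq> {1..d}" by auto
    fix i j assume i: "i \<in> {i \<in> {1..d}. u i = mn}" and j: "j \<in> {1..d}" and q: "0 < Q i j"
    have iD: "i \<in> {1..d}" and ui: "u i = mn" using i by auto
    have "(\<Sum>k=1..d. Q i k * (u k - mn)) = mv d Q u i - (\<Sum>k=1..d. Q i k * mn)"
      by (simp add: mv_def right_diff_distrib sum_subtractf)
    also have "(\<Sum>k=1..d. Q i k * mn) = mn"
      using stochD(2)[OF st iD] by (simp add: sum_distrib_right[symmetric])
    finally have "(\<Sum>k=1..d. Q i k * (u k - mn)) \<le> 0" using H[OF iD] ui c0 by simp
    moreover have nn: "\<And>k. k \<in> {1..d} \<Longrightarrow> 0 \<le> Q i k * (u k - mn)"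
      using le stochD(1)[OF st iD] by simp
    ultimately have "(\<Sum>k=1..d. Q i k * (u k - mn)) = 0"
      by (meson order_antisym sum_nonneg)
    then have "\<forall>k\<in>{1..d}. Q i k * (u k - mn) = 0"
      using sum_nonneg_eq_0_iff[of "{1..d}" "\<lambda>k. Q i k * (u k - mn)"] nn by auto
    then have "Q i j * (u j - mn) = 0" using j by auto
    then show "j \<in> {i \<in> {1..d}. u i = mn}" using q j by auto
  qed
qed

lemma two_closed_meet:
  assumes st: "stochastic d Q" and sc: "single_recurrent_class d Q"
    and C1: "closedset d Q S1" "S1 \<noteq> {}" and C2: "closedset d Q S2" "S2 \<noteq> {}"
  shows "S1 \<inter> S2 \<noteq> {}"
proof -
  obtain w1 where w1: "w1 \<in> S1" "recurrent d Q w1" using closed_has_recurrent[OF st C1] by auto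
  obtain w2 where w2: "w2 \<in> S2" "recurrent d Q w2" using closed_has_recurrent[OF st C2] by auto
  have "reach d Q w1 w2" using sc w1 w2 unfolding single_recurrent_class_def by auto
  moreover have "w2 \<in> {1..d}" using w2 unfolding recurrent_def by auto
  ultimately have "w2 \<in> S1" using closed_reach[OF st C1(1) w1(1)] by auto
  then show ?thesis using w2 by auto
qed

lemma minmax_const:
  fixes u :: "nat \<Rightarrow> real"
  assumes "i \<in> {i\<in>{1..d}. u i = Min (u ` {1..d})}"
    and "i \<in> {i\<in>{1..d}. (\<lambda>j. - u j) i = Min ((\<lambda>j. - u j) ` {1..d})}"
    and "j \<in> {1..d}"
  shows "u j = u i"
proof -
  have "u i \<le> u j" using assms by auto
  moreover have "- u i \<le> - u j" using assms by auto
  ultimately show ?thesis by simp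
qed

lemma kernel_const:
  assumes st: "stochastic d Q" and sc: "single_recurrent_class d Q" and d: "1 \<le> d"
    and H: "\<And>i. i \<in> {1..d} \<Longrightarrow> c + u i = mv d Q u i"
  shows "c = 0" and "\<And>i j. i \<in> {1..d} \<Longrightarrow> j \<in> {1..d} \<Longrightarrow> u i = u j"
proof -
  have H1: "\<And>i. i \<in> {1..d} \<Longrightarrow> mv d Q u i \<le> c + u i" using H by simp
  have H2: "mv d Q (\<lambda>j. - u j) i \<le> (- c) + (- u i)" if i: "i \<in> {1..d}" for i
    using H[OF i] by (simp add: mv_neg)
  have c1: "0 \<le> c" using min_principle(1)[OF st d H1] .
  have c2: "0 \<le> - c" using min_principle(1)[OF st d H2] .
  show c0: "c = 0" using c1 c2 by simp
  have "closedset d Q {i\<in>{1..d}. u i = Min (u ` {1..d})}"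
    using min_principle(2)[OF st d H1] c0 by simp
  moreover have "closedset d Q {i\<in>{1..d}. (\<lambda>j. - u j) i = Min ((\<lambda>j. - u j) ` {1..d})}"
    using min_principle(2)[OF st d H2] c0 by simp
  ultimately obtain w where
    w: "w \<in> {i\<in>{1..d}. u i = Min (u ` {1..d})}"
       "w \<in> {i\<in>{1..d}. (\<lambda>j. - u j) i = Min ((\<lambda>j. - u j) ` {1..d})}"
    using two_closed_meet[OF st sc] min_principle(3)[OF st d H1] min_principle(3)[OF st d H2]
    by blast
  fix i j assume "i \<in> {1..d}" "j \<in> {1..d}"
  then show "u i = u j" using minmax_const[OF w] by metis
qed

section \<open>Linear algebra: injective square systems are solvable\<close>

lemma LA:
  fixes M :: "nat \<Rightarrow> nat \<Rightarrow> real" and b :: "nat \<Rightarrow> real"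
  assumes inj: "\<And>x. (\<forall>i\<in>{1..d}. (\<Sum>j=1..d. M i j * x j) = 0) \<Longrightarrow> (\<forall>j\<in>{1..d}. x j = 0)"
  shows "\<exists>x. \<forall>i\<in>{1..d}. (\<Sum>j=1..d. M i j * x j) = b i"
proof -
  define A where "A = mat d d (\<lambda>(i,j). M (Suc i) (Suc j))"
  have A: "A \<in> carrier_mat d d" by (simp add: A_def)
  define xv where "xv v j = (if 1 \<le> j then v $ (j - 1) else 0)" for v :: "real vec" and j
  have conv: "(A *\<^sub>v v) $ (i - 1) = (\<Sum>j=1..d. M i j * xv v j)"
    if v: "v \<in> carrier_vec d" and i: "i \<in> {1..d}" for v i
  proof -
    have "(A *\<^sub>v v) $ (i - 1) = row A (i - 1) \<bullet> v" using i A by (subst index_mult_mat_vec) auto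
    also have "\<dots> = (\<Sum>j<d. M i (Suc j) * v $ j)"
      using i v unfolding scalar_prod_def A_def
      by (auto simp: atLeast0LessThan intro!: sum.cong)
    also have "\<dots> = (\<Sum>j=1..d. M i j * xv v j)"
      by (simp add: sum.atLeast1_atMost_eq xv_def)
    finally show ?thesis .
  qed
  have "det A \<noteq> 0"
  proof
    assume "det A = 0"
    then obtain v where v: "v \<in> carrier_vec d" "v \<noteq> 0\<^sub>v d" "A *\<^sub>v v = 0\<^sub>v d"
      using det_0_iff_vec_prod_zero_field[OF A] by auto
    have "\<forall>i\<in>{1..d}. (\<Sum>j=1..d. M i j * xv v j) = 0"
    proof
      fix i assume i: "i \<in> {1..d}"
      have "(A *\<^sub>v v) $ (i - 1) = 0" using v(3) i by auto
      then show "(\<Sum>j=1..d. M i j * xv v j) = 0" using conv[OF v(1) i] by simp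
    qed
    then have z: "\<forall>j\<in>{1..d}. xv v j = 0" by (rule inj)
    have "v = 0\<^sub>v d"
    proof (rule eq_vecI)
      fix k assume "k < dim_vec (0\<^sub>v d)"
      then have k: "k < d" by simp
      have "xv v (Suc k) = 0" using z k by auto
      then show "v $ k = 0\<^sub>v d $ k" using k by (simp add: xv_def)
    qed (use v in auto)
    then show False using v(2) by simp
  qed
  from det_non_zero_imp_unit[OF A this, of "()"]
  obtain B where B: "B \<in> carrier_mat d d" and AB: "A * B = 1\<^sub>m d"
    unfolding Units_def ring_mat_def by auto
  define bv where "bv = vec d (\<lambda>i. b (Suc i))"
  define y where "y = B *\<^sub>v bv"
  have y: "y \<in> carrier_vec d" using B by (simp add: y_def bv_def)
  have Ay: "A *\<^sub>v y = bv"
    using A B AB by (simp add: y_def bv_def assoc_mult_mat_vec[symmetric])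
  show ?thesis
  proof (rule exI[of _ "xv y"], intro ballI)
    fix i assume i: "i \<in> {1..d}"
    have "(\<Sum>j=1..d. M i j * xv y j) = (A *\<^sub>v y) $ (i - 1)" using conv[OF y i] by simp
    also have "\<dots> = b i"
    proof -
      have "i - 1 < d" "Suc (i - 1) = i" using i by auto
      then show ?thesis using Ay by (simp add: bv_def)
    qed
    finally show "(\<Sum>j=1..d. M i j * xv y j) = b i" .
  qed
qed

section \<open>Evaluation equation\<close>

lemma eval_exists:
  assumes st: "stochastic d Q" and sc: "single_recurrent_class d Q" and z: "z \<in> {1..d}"
  shows "\<exists>g h. h z = 0 \<and> (\<forall>i\<in>{1..d}. g + h i = f i + mv d Q h i)"
proof -
  have d: "1 \<le> d" using z by auto
  define M where "M i j = (if j = z then 1 else (if i = j then 1 else 0) - Q i j)" for i j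
  define hh where "hh x j = (if j = z then 0 else x j)" for x :: "nat \<Rightarrow> real" and j
  have key: "(\<Sum>j=1..d. M i j * x j) = x z + hh x i - mv d Q (hh x) i"
    if i: "i \<in> {1..d}" for x i
  proof -
    have "(\<Sum>j=1..d. M i j * x j) = (\<Sum>j=1..d. (if j = z then x z else 0)
          + ((if i = j then 1 else 0) * hh x j - Q i j * hh x j))"
      by (rule sum.cong) (auto simp: M_def hh_def algebra_simps)
    also have "\<dots> = x z + hh x i - mv d Q (hh x) i"
      using z i by (simp add: sum.distrib sum_subtractf sum_delta_l mv_def sum.delta')
    finally show ?thesis .
  qed
  have "\<exists>x. \<forall>i\<in>{1..d}. (\<Sum>j=1..d. M i j * x j) = f i"
  proof (rule LA)
    fix x assume H: "\<forall>i\<in>{1..d}. (\<Sum>j=1..d. M i j * x j) = 0"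
    have H': "\<And>i. i \<in> {1..d} \<Longrightarrow> x z + hh x i = mv d Q (hh x) i" using H key by force
    have xz: "x z = 0" using kernel_const(1)[OF st sc d H'] .
    have "\<And>j. j \<in> {1..d} \<Longrightarrow> hh x j = hh x z" using kernel_const(2)[OF st sc d H'] z by blast
    then have hz: "\<And>j. j \<in> {1..d} \<Longrightarrow> hh x j = 0" using z by (simp add: hh_def)
    show "\<forall>j\<in>{1..d}. x j = 0"
    proof
      fix j assume j: "j \<in> {1..d}"
      show "x j = 0"
      proof (cases "j = z")
        case True then show ?thesis using xz by simp
      next
        case False then show ?thesis using hz[OF j] by (simp add: hh_def)
      qed
    qed
  qed
  then obtain x where x: "\<forall>i\<in>{1..d}. (\<Sum>j=1..d. M i j * x j) = f i" by auto
  show ?thesis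
    by (rule exI[of _ "x z"], rule exI[of _ "hh x"]) (use x key in \<open>auto simp: hh_def\<close>)
qed

section \<open>Long-run averages\<close>

lemma longrun_eval:
  assumes st: "stochastic d Q" and i0: "i0 \<in> {1..d}"
    and ev: "\<And>i. i \<in> {1..d} \<Longrightarrow> g + h i = f i + mv d Q h i"
  shows "longrun_avg d Q f i0 = g"
proof -
  define E where "E t = (\<Sum>j=1..d. mpow d Q t i0 j * h j)" for t
  have step: "(\<Sum>j=1..d. mpow d Q t i0 j * f j) = g - (E (Suc t) - E t)" for t
  proof -
    have "(\<Sum>j=1..d. mpow d Q t i0 j * f j)
        = (\<Sum>j=1..d. mpow d Q t i0 j * g + mpow d Q t i0 j * h j - mpow d Q t i0 j * mv d Q h j)"
    proof (rule sum.cong)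
      fix j assume j: "j \<in> {1..d}"
      show "mpow d Q t i0 j * f j = mpow d Q t i0 j * g + mpow d Q t i0 j * h j - mpow d Q t i0 j * mv d Q h j"
        using arg_cong[OF ev[OF j, symmetric], of "\<lambda>x. mpow d Q t i0 j * x"]
        by (simp add: algebra_simps)
    qed simp
    also have "\<dots> = g * (\<Sum>j=1..d. mpow d Q t i0 j) + E t
        - (\<Sum>j=1..d. mpow d Q t i0 j * mv d Q h j)"
      by (simp add: sum.distrib sum_subtractf E_def sum_distrib_left mult.commute)
    also have "(\<Sum>j=1..d. mpow d Q t i0 j * mv d Q h j) = E (Suc t)"
      unfolding E_def mv_def
      by (simp add: sum_distrib_left sum_distrib_right mult.assoc) (rule sum.swap)
    finally show ?thesis using mpow_rowsum[OF st i0] by simp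
  qed
  define B where "B = (\<Sum>j=1..d. \<bar>h j\<bar>)"
  have Eb: "\<bar>E t\<bar> \<le> B" for t
  proof -
    have "\<bar>E t\<bar> \<le> (\<Sum>j=1..d. \<bar>mpow d Q t i0 j * h j\<bar>)" unfolding E_def by (rule sum_abs)
    also have "\<dots> \<le> B" unfolding B_def
    proof (rule sum_mono)
      fix j assume j: "j \<in> {1..d}"
      have "0 \<le> mpow d Q t i0 j" "mpow d Q t i0 j \<le> 1"
        using mpow_nonneg[OF st j] mpow_le1[OF st i0 j] by auto
      then show "\<bar>mpow d Q t i0 j * h j\<bar> \<le> \<bar>h j\<bar>"
        by (simp add: abs_mult mult_left_le_one_le)
    qed
    finally show ?thesis .
  qed
  define avg where "avg T = (\<Sum>t<T. \<Sum>j=1..d. mpow d Q t i0 j * f j) / real T" for T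
  have avgeq: "avg T = g - (E T - E 0) / real T" if T: "T \<ge> 1" for T
  proof -
    have "(\<Sum>t<T. \<Sum>j=1..d. mpow d Q t i0 j * f j) = (\<Sum>t<T. g - (E (Suc t) - E t))"
      using step by simp
    also have "\<dots> = real T * g - (E T - E 0)"
    proof -
      have tel: "(\<Sum>t<T. E (Suc t)) - sum E {..<T} = E T - E 0"
        using sum_lessThan_telescope[of E T] by (simp add: sum_subtractf)
      have "(\<Sum>t<T. g - (E (Suc t) - E t)) = real T * g - ((\<Sum>t<T. E (Suc t)) - sum E {..<T})"
        by (simp add: sum_subtractf)
      then show ?thesis using tel by simp
    qed
    finally show ?thesis using T by (simp add: avg_def field_simps)
  qed
  have lo: "avg T \<ge> g - 2 * B / real T" and hi: "avg T \<le> g + 2 * B / real T" if "T \<ge> 1" for T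
  proof -
    define q where "q = (E T - E 0) / real T"
    have "\<bar>q\<bar> \<le> 2 * B / real T"
      using Eb[of T] Eb[of 0] that unfolding q_def by (simp add: abs_divide divide_right_mono)
    then have "q \<le> 2 * B / real T" "- q \<le> 2 * B / real T" by (auto simp only: abs_le_iff)
    then show "avg T \<ge> g - 2 * B / real T" "avg T \<le> g + 2 * B / real T"
      using avgeq[OF that] unfolding q_def[symmetric] by auto
  qed
  have "avg \<longlonglongrightarrow> g"
  proof (rule tendsto_sandwich)
    show "\<forall>\<^sub>F T in sequentially. g - 2 * B / real T \<le> avg T"
      using lo by (auto simp: eventually_sequentially)
    show "\<forall>\<^sub>F T in sequentially. avg T \<le> g + 2 * B / real T"
      using hi by (auto simp: eventually_sequentially)
    show "(\<lambda>T. g - 2 * B / real T) \<longlonglongrightarrow> g"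
      using tendsto_diff[OF tendsto_const lim_const_over_n[of "2 * B"]] by simp
    show "(\<lambda>T. g + 2 * B / real T) \<longlonglongrightarrow> g"
      using tendsto_add[OF tendsto_const lim_const_over_n[of "2 * B"]] by simp
  qed
  then show ?thesis unfolding longrun_avg_def avg_def[symmetric] by (rule limI)
qed


lemma mv_ge_min:
  assumes st: "stochastic d Q" and i: "i \<in> {1..d}" and le: "\<And>j. j \<in> {1..d} \<Longrightarrow> m \<le> u j"
  shows "m \<le> mv d Q u i"
proof -
  have "m = (\<Sum>j=1..d. Q i j * m)"
    using stochD(2)[OF st i] by (simp add: sum_distrib_right[symmetric])
  also have "\<dots> \<le> mv d Q u i" unfolding mv_def
    by (rule sum_mono) (use le stochD(1)[OF st i] in \<open>auto intro: mult_left_mono\<close>)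
  finally show ?thesis .
qed

lemma closed_agree:
  assumes "closedset d Q C" "\<And>i j. i \<in> C \<Longrightarrow> Q i j = Q' i j"
  shows "closedset d Q' C"
  using assms unfolding closedset_def by auto

lemma pm_stoch:
  assumes "stochastic d P0" "stochastic d P1" "policy d pol"
  shows "stochastic d (pol_matrix P0 P1 pol)"
  unfolding stochastic_def
proof (intro conjI ballI)
  fix i j assume i: "i \<in> {1..d}" and j: "j \<in> {1..d}"
  have "0 \<le> pol i" "pol i \<le> 1" using assms(3) i unfolding policy_def by auto
  moreover have "0 \<le> P0 i j" "0 \<le> P1 i j" using stochD(1)[OF assms(1) i j] stochD(1)[OF assms(2) i j] by auto
  ultimately show "0 \<le> pol_matrix P0 P1 pol i j" unfolding pol_matrix_def by simp
next
  fix i assume i: "i \<in> {1..d}"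
  have "(\<Sum>j=1..d. pol_matrix P0 P1 pol i j) = (1 - pol i) * (\<Sum>j=1..d. P0 i j) + pol i * (\<Sum>j=1..d. P1 i j)"
    unfolding pol_matrix_def by (simp add: sum.distrib sum_distrib_left)
  then show "(\<Sum>j=1..d. pol_matrix P0 P1 pol i j) = 1" using stochD(2)[OF assms(1) i] stochD(2)[OF assms(2) i] by simp
qed

lemma mv_pm: "mv d (pol_matrix P0 P1 pol) h i = (1 - pol i) * mv d P0 h i + pol i * mv d P1 h i"
  unfolding mv_def pol_matrix_def
  by (simp add: distrib_right sum.distrib sum_distrib_left mult.assoc)

lemma comb: "pol_reward A0 A1 pol i + mv d (pol_matrix P0 P1 pol) h i
   = (1 - pol i) * (A0 i + mv d P0 h i) + pol i * (A1 i + mv d P1 h i)"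
  unfolding mv_pm pol_reward_def by (simp add: algebra_simps)

definition detpol :: "nat \<Rightarrow> (nat \<Rightarrow> real) set" where
  "detpol d = {\<sigma>. (\<forall>i. \<sigma> i = 0 \<or> \<sigma> i = 1) \<and> (\<forall>i. i \<notin> {1..d} \<longrightarrow> \<sigma> i = 0)}"

lemma detpol_finite: "finite (detpol d)"
proof -
  have "detpol d \<subseteq> (\<lambda>S i. if i \<in> S then 1 else 0) ` Pow {1..d}"
  proof
    fix \<sigma> assume s: "\<sigma> \<in> detpol d"
    have "\<sigma> = (\<lambda>i. if i \<in> {i. \<sigma> i = 1} then 1 else 0)"
    proof
      fix i
      have "\<sigma> i = 0 \<or> \<sigma> i = 1" using s unfolding detpol_def by blast
      then show "\<sigma> i = (if i \<in> {i. \<sigma> i = 1} then 1 else 0)" by auto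
    qed
    moreover have "{i. \<sigma> i = 1} \<subseteq> {1..d}"
    proof
      fix i assume "i \<in> {i. \<sigma> i = 1}"
      then have "\<sigma> i \<noteq> 0" by simp
      then show "i \<in> {1..d}" using s unfolding detpol_def by blast
    qed
    ultimately show "\<sigma> \<in> (\<lambda>S i. if i \<in> S then 1 else 0) ` Pow {1..d}" by blast
  qed
  then show ?thesis by (rule finite_subset) simp
qed

lemma detpol_01: "\<sigma> \<in> detpol d \<Longrightarrow> \<sigma> i = 0 \<or> \<sigma> i = 1"
  unfolding detpol_def by blast

lemma detpol_policy: "\<sigma> \<in> detpol d \<Longrightarrow> policy d \<sigma>"
  unfolding policy_def
proof
  fix i assume "\<sigma> \<in> detpol d"
  then have "\<sigma> i = 0 \<or> \<sigma> i = 1" by (rule detpol_01)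
  then show "0 \<le> \<sigma> i \<and> \<sigma> i \<le> 1" by auto
qed

lemma comb_det:
  assumes "\<sigma> i = 0 \<or> \<sigma> i = 1"
  shows "pol_reward A0 A1 \<sigma> i + mv d (pol_matrix P0 P1 \<sigma>) h i
     = (if \<sigma> i = 1 then A1 i + mv d P1 h i else A0 i + mv d P0 h i)"
  using assms unfolding comb by auto

locale mdp =
  fixes d :: nat and P0 P1 :: "nat \<Rightarrow> nat \<Rightarrow> real"
  assumes st0: "stochastic d P0" and st1: "stochastic d P1"
    and uni: "unichain d P0 P1" and d1: "1 \<le> d"
begin

abbreviation "Qp pol \<equiv> pol_matrix P0 P1 pol"

lemma Qp_stoch: "policy d pol \<Longrightarrow> stochastic d (Qp pol)"
  using pm_stoch[OF st0 st1] .

lemma Qp_sc: "policy d pol \<Longrightarrow> single_recurrent_class d (Qp pol)"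
  using uni unfolding unichain_def by auto

definition bell :: "(nat \<Rightarrow> real) \<Rightarrow> (nat \<Rightarrow> real) \<Rightarrow> real \<Rightarrow> (nat \<Rightarrow> real) \<Rightarrow> bool" where
  "bell A0 A1 g h \<longleftrightarrow> (\<forall>i\<in>{1..d}. g + h i = max (A0 i + mv d P0 h i) (A1 i + mv d P1 h i))"

lemma bell_super:
  assumes "bell A0 A1 g h" "policy d pol" "i \<in> {1..d}"
  shows "pol_reward A0 A1 pol i + mv d (Qp pol) h i \<le> g + h i"
proof -
  have p: "0 \<le> pol i" "pol i \<le> 1" using assms(2,3) unfolding policy_def by auto
  have e: "g + h i = max (A0 i + mv d P0 h i) (A1 i + mv d P1 h i)"
    using assms(1,3) unfolding bell_def by auto
  have "(1 - pol i) * (A0 i + mv d P0 h i) \<le> (1 - pol i) * (g + h i)"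
    using p e by (intro mult_left_mono) auto
  moreover have "pol i * (A1 i + mv d P1 h i) \<le> pol i * (g + h i)"
    using p e by (intro mult_left_mono) auto
  ultimately show ?thesis unfolding comb by (simp add: algebra_simps)
qed

definition amax :: "(nat \<Rightarrow> real) \<Rightarrow> (nat \<Rightarrow> real) \<Rightarrow> (nat \<Rightarrow> real) \<Rightarrow> nat \<Rightarrow> real" where
  "amax A0 A1 h i = (if i \<in> {1..d} \<and> A0 i + mv d P0 h i \<le> A1 i + mv d P1 h i then 1 else 0)"

lemma amax_det: "amax A0 A1 h \<in> detpol d"
  unfolding detpol_def amax_def by auto

lemma amax_eq:
  assumes "bell A0 A1 g h" "i \<in> {1..d}"
  shows "g + h i = pol_reward A0 A1 (amax A0 A1 h) i + mv d (Qp (amax A0 A1 h)) h i"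
proof -
  have "amax A0 A1 h i = 0 \<or> amax A0 A1 h i = 1" unfolding amax_def by auto
  from comb_det[where \<sigma>="amax A0 A1 h" and i=i, OF this] show ?thesis
    using assms unfolding bell_def amax_def by (auto simp: max_def)
qed

lemma bell_unique:
  assumes b1: "bell A0 A1 g1 h1" and b2: "bell A0 A1 g2 h2"
  shows "g1 = g2" and "\<exists>c. \<forall>i\<in>{1..d}. h1 i = h2 i + c"
proof -
  define p1 where "p1 = amax A0 A1 h1"
  define p2 where "p2 = amax A0 A1 h2"
  have pp1: "policy d p1" and pp2: "policy d p2"
    using amax_det detpol_policy unfolding p1_def p2_def by auto
  define \<delta> where "\<delta> i = h1 i - h2 i" for i
  have H2: "mv d (Qp p2) \<delta> i \<le> (g1 - g2) + \<delta> i" if i: "i \<in> {1..d}" for i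
  proof -
    have "g2 + h2 i = pol_reward A0 A1 p2 i + mv d (Qp p2) h2 i"
      using amax_eq[OF b2 i] unfolding p2_def .
    moreover have "pol_reward A0 A1 p2 i + mv d (Qp p2) h1 i \<le> g1 + h1 i"
      using bell_super[OF b1 pp2 i] .
    ultimately show ?thesis unfolding \<delta>_def mv_diff by simp
  qed
  have H1: "mv d (Qp p1) (\<lambda>j. - \<delta> j) i \<le> (g2 - g1) + (- \<delta> i)" if i: "i \<in> {1..d}" for i
  proof -
    have "g1 + h1 i = pol_reward A0 A1 p1 i + mv d (Qp p1) h1 i"
      using amax_eq[OF b1 i] unfolding p1_def .
    moreover have "pol_reward A0 A1 p1 i + mv d (Qp p1) h2 i \<le> g2 + h2 i"
      using bell_super[OF b2 pp1 i] .
    ultimately show ?thesis unfolding \<delta>_def mv_neg mv_diff by simp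
  qed
  have s2: "stochastic d (Qp p2)" and s1: "stochastic d (Qp p1)" using Qp_stoch pp1 pp2 by auto
  have "0 \<le> g1 - g2" using min_principle(1)[OF s2 d1 H2] .
  moreover have "0 \<le> g2 - g1" using min_principle(1)[OF s1 d1 H1] .
  ultimately show g: "g1 = g2" by simp
  define Sa where "Sa = {i\<in>{1..d}. \<delta> i = Min (\<delta> ` {1..d})}"
  define Sb where "Sb = {i\<in>{1..d}. (\<lambda>j. - \<delta> j) i = Min ((\<lambda>j. - \<delta> j) ` {1..d})}"
  have ca: "closedset d (Qp p2) Sa" unfolding Sa_def using min_principle(2)[OF s2 d1 H2] g by simp
  have cb: "closedset d (Qp p1) Sb" unfolding Sb_def using min_principle(2)[OF s1 d1 H1] g by simp
  have nea: "Sa \<noteq> {}" unfolding Sa_def using min_principle(3)[OF s2 d1 H2] .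
  have neb: "Sb \<noteq> {}" unfolding Sb_def using min_principle(3)[OF s1 d1 H1] .
  have "Sa \<inter> Sb \<noteq> {}"
  proof
    assume disj: "Sa \<inter> Sb = {}"
    define p3 where "p3 i = (if i \<in> Sb then p1 i else p2 i)" for i
    have pp3: "policy d p3" using pp1 pp2 unfolding policy_def p3_def by auto
    have ag1: "Qp p2 i j = Qp p3 i j" if "i \<in> Sa" for i j
    proof -
      have "i \<notin> Sb" using disj that by blast
      then show ?thesis unfolding pol_matrix_def p3_def by simp
    qed
    have ag2: "Qp p1 i j = Qp p3 i j" if "i \<in> Sb" for i j
      using that unfolding pol_matrix_def p3_def by simp
    have "closedset d (Qp p3) Sa" by (rule closed_agree[OF ca ag1])
    moreover have "closedset d (Qp p3) Sb" by (rule closed_agree[OF cb ag2])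
    ultimately have "Sa \<inter> Sb \<noteq> {}"
      by (rule two_closed_meet[OF Qp_stoch[OF pp3] Qp_sc[OF pp3], OF _ nea _ neb])
    then show False using disj by simp
  qed
  then obtain w where wa: "w \<in> Sa" and wb: "w \<in> Sb" by auto
  have "\<forall>i\<in>{1..d}. h1 i = h2 i + \<delta> w"
  proof
    fix i assume i: "i \<in> {1..d}"
    have "\<delta> i = \<delta> w" using minmax_const[OF wa[unfolded Sa_def] wb[unfolded Sb_def] i] .
    then show "h1 i = h2 i + \<delta> w" unfolding \<delta>_def by simp
  qed
  then show "\<exists>c. \<forall>i\<in>{1..d}. h1 i = h2 i + c" by blast
qed

lemma bell_shift:
  assumes "bell A0 A1 g h"
  shows "bell A0 A1 g (\<lambda>i. h i + c)"
  unfolding bell_def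
proof
  fix i assume i: "i \<in> {1..d}"
  have e: "g + h i = max (A0 i + mv d P0 h i) (A1 i + mv d P1 h i)" using assms i unfolding bell_def by auto
  show "g + (h i + c) = max (A0 i + mv d P0 (\<lambda>i. h i + c) i) (A1 i + mv d P1 (\<lambda>i. h i + c) i)"
    using e mv_const[OF st0 i, of h c] mv_const[OF st1 i, of h c] by (simp add: max_def)
qed

end


context mdp
begin

lemma bs_bell: "bellman_sol d P0 P1 R0 R1 nu g h \<longleftrightarrow> bell (\<lambda>i. R0 i + nu) R1 g h"
  unfolding bellman_sol_def bell_def mv_def by simp

lemma has_recurrent: "policy d pol \<Longrightarrow> \<exists>i. recurrent d (Qp pol) i"
proof -
  assume p: "policy d pol"
  have "closedset d (Qp pol) {1..d}" unfolding closedset_def by auto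
  moreover have "{1..d} \<noteq> {}" using d1 by auto
  ultimately show ?thesis using closed_has_recurrent[OF Qp_stoch[OF p]] by blast
qed

lemma bell_exists: "\<exists>g h. bell A0 A1 g h"
proof -
  define DP where "DP = detpol d"
  define zr where "zr \<sigma> = (LEAST i. recurrent d (Qp \<sigma>) i)" for \<sigma>
  have zr: "recurrent d (Qp \<sigma>) (zr \<sigma>)" if "\<sigma> \<in> DP" for \<sigma>
  proof -
    have "\<exists>i. recurrent d (Qp \<sigma>) i" using has_recurrent detpol_policy that unfolding DP_def by blast
    then show ?thesis unfolding zr_def by (rule LeastI_ex)
  qed
  have zrD: "zr \<sigma> \<in> {1..d}" if "\<sigma> \<in> DP" for \<sigma> using zr[OF that] unfolding recurrent_def by auto
  define EQ where "EQ \<sigma> g h \<longleftrightarrow> h (zr \<sigma>) = 0 \<and>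
      (\<forall>i\<in>{1..d}. g + h i = pol_reward A0 A1 \<sigma> i + mv d (Qp \<sigma>) h i)" for \<sigma> g h
  have exEQ: "\<exists>gh. EQ \<sigma> (fst gh) (snd gh)" if s: "\<sigma> \<in> DP" for \<sigma>
  proof -
    have p: "policy d \<sigma>" using s detpol_policy unfolding DP_def by auto
    obtain g h where "EQ \<sigma> g h"
      using eval_exists[OF Qp_stoch[OF p] Qp_sc[OF p] zrD[OF s], of "pol_reward A0 A1 \<sigma>"]
      unfolding EQ_def by blast
    then show ?thesis by (intro exI[of _ "(g, h)"]) simp
  qed
  define G where "G \<sigma> = fst (SOME gh. EQ \<sigma> (fst gh) (snd gh))" for \<sigma>
  define H where "H \<sigma> = snd (SOME gh. EQ \<sigma> (fst gh) (snd gh))" for \<sigma>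
  have GH: "EQ \<sigma> (G \<sigma>) (H \<sigma>)" if "\<sigma> \<in> DP" for \<sigma>
    unfolding G_def H_def using someI_ex[OF exEQ[OF that]] .
  have finDP: "finite DP" unfolding DP_def by (rule detpol_finite)
  have z0: "(\<lambda>i. 0) \<in> DP" unfolding DP_def detpol_def by auto
  define gm where "gm = Max (G ` DP)"
  define D1 where "D1 = {\<sigma>\<in>DP. G \<sigma> = gm}"
  have "gm \<in> G ` DP" unfolding gm_def using finDP z0 by (intro Max_in) auto
  then have D1ne: "D1 \<noteq> {}" unfolding D1_def by auto
  have finD1: "finite D1" using finDP unfolding D1_def by auto
  define SH where "SH \<sigma> = (\<Sum>i=1..d. H \<sigma> i)" for \<sigma>
  define sm where "sm = Max (SH ` D1)"
  have "sm \<in> SH ` D1" unfolding sm_def using finD1 D1ne by (intro Max_in) auto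
  then obtain \<pi> where \<pi>D1: "\<pi> \<in> D1" and \<pi>s: "SH \<pi> = sm" by auto
  have \<pi>DP: "\<pi> \<in> DP" using \<pi>D1 unfolding D1_def by auto
  have gmax: "G \<sigma> \<le> G \<pi>" if "\<sigma> \<in> DP" for \<sigma>
    using \<pi>D1 that finDP unfolding D1_def gm_def by auto
  have smax: "SH \<sigma> \<le> SH \<pi>" if "\<sigma> \<in> DP" "G \<sigma> = G \<pi>" for \<sigma>
  proof -
    have "\<sigma> \<in> D1" using that \<pi>D1 unfolding D1_def by auto
    then show ?thesis using \<pi>s finD1 unfolding sm_def by auto
  qed
  define g where "g = G \<pi>"
  define h where "h = H \<pi>"
  define V0 where "V0 i = A0 i + mv d P0 h i" for i
  define V1 where "V1 i = A1 i + mv d P1 h i" for i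
  have \<pi>01: "\<pi> i = 0 \<or> \<pi> i = 1" for i using \<pi>DP detpol_01 unfolding DP_def by blast
  have E: "g + h i = (if \<pi> i = 1 then V1 i else V0 i)" if i: "i \<in> {1..d}" for i
    using GH[OF \<pi>DP] i comb_det[where \<sigma>=\<pi> and i=i, OF \<pi>01]
    unfolding EQ_def g_def h_def V0_def V1_def by auto
  show ?thesis
  proof (intro exI[of _ g] exI[of _ h], rule ccontr)
    assume nb: "\<not> bell A0 A1 g h"
    then obtain i0 where i0: "i0 \<in> {1..d}" and ne: "g + h i0 \<noteq> max (V0 i0) (V1 i0)"
      unfolding bell_def V0_def V1_def by auto
    define better where "better i \<longleftrightarrow> i \<in> {1..d} \<and> (if \<pi> i = 1 then V1 i < V0 i else V0 i < V1 i)" for i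
    define \<pi>' where "\<pi>' i = (if better i then 1 - \<pi> i else \<pi> i)" for i
    have \<pi>'01: "\<pi>' i = 0 \<or> \<pi>' i = 1" for i using \<pi>01[of i] unfolding \<pi>'_def by auto
    have \<pi>'DP: "\<pi>' \<in> DP"
      unfolding DP_def detpol_def
    proof (intro CollectI conjI allI impI)
      fix i show "\<pi>' i = 0 \<or> \<pi>' i = 1" by (rule \<pi>'01)
    next
      fix i assume "i \<notin> {1..d}"
      then show "\<pi>' i = 0" using \<pi>DP unfolding \<pi>'_def better_def DP_def detpol_def by auto
    qed
    have pp': "policy d \<pi>'" using \<pi>'DP detpol_policy unfolding DP_def by auto
    have pp: "policy d \<pi>" using \<pi>DP detpol_policy unfolding DP_def by auto
    define W where "W i = (if \<pi>' i = 1 then V1 i else V0 i)" for i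
    define \<Delta> where "\<Delta> i = W i - (g + h i)" for i
    have Wc: "pol_reward A0 A1 \<pi>' i + mv d (Qp \<pi>') h i = W i" for i
      using comb_det[where \<sigma>=\<pi>' and i=i, OF \<pi>'01] unfolding W_def V0_def V1_def by auto
    have \<Delta>nn: "0 \<le> \<Delta> i" if i: "i \<in> {1..d}" for i
      using E[OF i] \<pi>01[of i] i unfolding \<Delta>_def W_def \<pi>'_def better_def by auto
    have \<Delta>z: "\<pi>' i = \<pi> i" if i: "i \<in> {1..d}" and "\<Delta> i = 0" for i
      using E[OF i] \<pi>01[of i] i that(2) unfolding \<Delta>_def W_def \<pi>'_def better_def by auto
    have \<Delta>pos: "0 < \<Delta> i0"
      using E[OF i0] \<pi>01[of i0] i0 ne unfolding \<Delta>_def W_def \<pi>'_def better_def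
      by (auto simp: max_def split: if_splits)
    define g' where "g' = G \<pi>'"
    define h' where "h' = H \<pi>'"
    have EQ': "EQ \<pi>' g' h'" unfolding g'_def h'_def using GH[OF \<pi>'DP] .
    define u where "u i = h' i - h i" for i
    have key: "(g' - g) + u i = \<Delta> i + mv d (Qp \<pi>') u i" if i: "i \<in> {1..d}" for i
    proof -
      have "g' + h' i = pol_reward A0 A1 \<pi>' i + mv d (Qp \<pi>') h' i" using EQ' i unfolding EQ_def by auto
      moreover have "g + h i + \<Delta> i = pol_reward A0 A1 \<pi>' i + mv d (Qp \<pi>') h i"
        using Wc[of i] unfolding \<Delta>_def by simp
      ultimately show ?thesis unfolding u_def mv_diff by simp
    qed
    have st': "stochastic d (Qp \<pi>')" using Qp_stoch[OF pp'] .
    have st: "stochastic d (Qp \<pi>)" using Qp_stoch[OF pp] .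
    have H': "mv d (Qp \<pi>') u i \<le> (g' - g) + u i" if i: "i \<in> {1..d}" for i
      using key[OF i] \<Delta>nn[OF i] by simp
    have "0 \<le> g' - g" using min_principle(1)[OF st' d1 H'] .
    moreover have "g' \<le> g" using gmax[OF \<pi>'DP] unfolding g'_def g_def .
    ultimately have gg: "g' = g" by simp
    define S where "S = {i\<in>{1..d}. u i = Min (u ` {1..d})}"
    have cS': "closedset d (Qp \<pi>') S" unfolding S_def using min_principle(2)[OF st' d1 H'] gg by simp
    have neS: "S \<noteq> {}" unfolding S_def using min_principle(3)[OF st' d1 H'] .
    define mn where "mn = Min (u ` {1..d})"
    have le: "mn \<le> u j" if "j \<in> {1..d}" for j unfolding mn_def using that by auto
    have \<Delta>S: "\<Delta> i = 0" if iS: "i \<in> S" for i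
    proof -
      have i: "i \<in> {1..d}" and ui: "u i = mn" using iS unfolding S_def mn_def by auto
      have "mn \<le> mv d (Qp \<pi>') u i" using mv_ge_min[OF st' i le] .
      then have "\<Delta> i \<le> 0" using key[OF i] gg ui by simp
      then show ?thesis using \<Delta>nn[OF i] by simp
    qed
    have agree: "Qp \<pi>' i j = Qp \<pi> i j" if "i \<in> S" for i j
    proof -
      have "i \<in> {1..d}" using that unfolding S_def by auto
      then have "\<pi>' i = \<pi> i" using \<Delta>z \<Delta>S[OF that] by auto
      then show ?thesis unfolding pol_matrix_def by simp
    qed
    have cS: "closedset d (Qp \<pi>) S" by (rule closed_agree[OF cS' agree])
    have RecS: "v \<in> S" if cX: "closedset d (Qp X) S" and pX: "policy d X"
      and rv: "recurrent d (Qp X) v" for X v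
    proof -
      obtain w where w: "w \<in> S" "recurrent d (Qp X) w"
        using closed_has_recurrent[OF Qp_stoch[OF pX] cX neS] by auto
      have "reach d (Qp X) w v" using Qp_sc[OF pX] w rv unfolding single_recurrent_class_def by auto
      moreover have "v \<in> {1..d}" using rv unfolding recurrent_def by auto
      ultimately show ?thesis using closed_reach[OF Qp_stoch[OF pX] cX w(1)] by auto
    qed
    have recEq: "recurrent d (Qp \<pi>) v \<longleftrightarrow> recurrent d (Qp \<pi>') v" for v
    proof (cases "v \<in> S")
      case True
      show ?thesis using agree_recurrent[OF st cS _ True, of "Qp \<pi>'"] agree by auto
    next
      case False
      then show ?thesis using RecS[OF cS pp] RecS[OF cS' pp'] by auto
    qed
    have "recurrent d (Qp \<pi>') = recurrent d (Qp \<pi>)" using recEq by (intro ext) simp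
    then have zeq: "zr \<pi>' = zr \<pi>" unfolding zr_def by simp
    have zS: "zr \<pi> \<in> S" using RecS[OF cS pp zr[OF \<pi>DP]] .
    have "u (zr \<pi>) = 0"
      using EQ' GH[OF \<pi>DP] zeq unfolding u_def EQ_def h_def by simp
    then have mn0: "mn = 0" using zS unfolding S_def mn_def by auto
    have unn: "0 \<le> u i" if "i \<in> {1..d}" for i using le[OF that] mn0 by simp
    have "0 \<le> mv d (Qp \<pi>') u i0" using mv_ge_min[OF st' i0 unn] .
    then have ui0: "0 < u i0" using key[OF i0] gg \<Delta>pos by simp
    have "u i0 \<le> (\<Sum>i=1..d. u i)" by (rule member_le_sum) (use i0 unn in auto)
    then have "0 < (\<Sum>i=1..d. u i)" using ui0 by simp
    also have "(\<Sum>i=1..d. u i) = SH \<pi>' - SH \<pi>"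
      unfolding u_def SH_def h'_def h_def by (simp add: sum_subtractf)
    finally have "SH \<pi> < SH \<pi>'" by simp
    moreover have "SH \<pi>' \<le> SH \<pi>" using smax[OF \<pi>'DP] gg unfolding g'_def g_def by simp
    ultimately show False by simp
  qed
qed

end


section \<open>An affine limit argument\<close>

lemma affine_limit:
  fixes F :: "'s \<Rightarrow> 'k \<Rightarrow> real \<Rightarrow> real"
  assumes finD: "finite D" and finK: "finite K"
    and aff: "\<And>\<sigma> k. \<sigma> \<in> D \<Longrightarrow> k \<in> K \<Longrightarrow> \<exists>a b. \<forall>\<nu>. F \<sigma> k \<nu> = a + \<nu> * b"
    and e: "\<bar>e\<bar> = 1"
    and seq: "\<And>n. \<exists>\<sigma>\<in>D. \<forall>k\<in>K. F \<sigma> k (x + e / real (Suc n)) \<le> 0"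
  shows "\<exists>\<sigma>\<in>D. \<forall>k\<in>K. F \<sigma> k x \<le> 0"
proof (rule ccontr)
  assume "\<not> ?thesis"
  then have "\<forall>\<sigma>\<in>D. \<exists>k\<in>K. 0 < F \<sigma> k x" by (auto simp: not_le)
  then obtain kk where kk: "\<And>\<sigma>. \<sigma> \<in> D \<Longrightarrow> kk \<sigma> \<in> K \<and> 0 < F \<sigma> (kk \<sigma>) x" by metis
  have "\<forall>\<sigma>\<in>D. \<exists>ab. \<forall>\<nu>. F \<sigma> (kk \<sigma>) \<nu> = fst ab + \<nu> * snd ab"
    using aff kk by fastforce
  then obtain ab where ab: "\<And>\<sigma> \<nu>. \<sigma> \<in> D \<Longrightarrow> F \<sigma> (kk \<sigma>) \<nu> = fst (ab \<sigma>) + \<nu> * snd (ab \<sigma>)"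
    by metis
  have Dne: "D \<noteq> {}" using seq[of 0] by auto
  define E where "E = Min ((\<lambda>\<sigma>. F \<sigma> (kk \<sigma>) x) ` D)"
  have Epos: "0 < E" unfolding E_def using finD Dne kk by (subst Min_gr_iff) auto
  have Ele: "E \<le> F \<sigma> (kk \<sigma>) x" if "\<sigma> \<in> D" for \<sigma> unfolding E_def using finD that by auto
  define B where "B = (\<Sum>\<sigma>\<in>D. \<bar>snd (ab \<sigma>)\<bar>) + 1"
  have Bpos: "0 < B" unfolding B_def by (simp add: add_nonneg_pos sum_nonneg)
  have Bge: "\<bar>snd (ab \<sigma>)\<bar> \<le> B" if "\<sigma> \<in> D" for \<sigma>
  proof -
    have "\<bar>snd (ab \<sigma>)\<bar> \<le> (\<Sum>\<sigma>\<in>D. \<bar>snd (ab \<sigma>)\<bar>)" by (rule member_le_sum) (use that finD in auto)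
    then show ?thesis unfolding B_def by simp
  qed
  obtain n' :: nat where n': "n' > 0" "inverse (real n') < E / B"
    using ex_inverse_of_nat_less[of "E / B"] Epos Bpos by auto
  obtain \<sigma> where s: "\<sigma> \<in> D" and le: "\<forall>k\<in>K. F \<sigma> k (x + e / real (Suc (n' - 1))) \<le> 0"
    using seq by blast
  have sn: "real (Suc (n' - 1)) = real n'" using n'(1) by simp
  define b where "b = snd (ab \<sigma>)"
  define t where "t = e / real n'"
  have "F \<sigma> (kk \<sigma>) (x + t) = F \<sigma> (kk \<sigma>) x + t * b"
    using ab[OF s, of "x + t"] ab[OF s, of x] unfolding b_def by (simp add: algebra_simps)
  moreover have "\<bar>t * b\<bar> < E"
  proof -
    have "\<bar>t * b\<bar> = \<bar>b\<bar> / real n'" unfolding t_def using e by (simp add: abs_mult)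
    also have "\<dots> \<le> B / real n'" using Bge[OF s] n'(1) unfolding b_def by (simp add: divide_right_mono)
    also have "\<dots> = B * inverse (real n')" by (simp add: divide_inverse)
    also have "\<dots> < B * (E / B)" using n'(2) Bpos by (intro mult_strict_left_mono) auto
    also have "\<dots> = E" using Bpos by simp
    finally show ?thesis .
  qed
  moreover have "F \<sigma> (kk \<sigma>) (x + t) \<le> 0" using le kk[OF s] sn unfolding t_def by auto
  ultimately show False using Ele[OF s] by (auto simp: abs_less_iff)
qed


lemma mv_cong: "(\<And>j. j \<in> {1..d} \<Longrightarrow> u j = v j) \<Longrightarrow> mv d Q u i = mv d Q v i"
  unfolding mv_def by (rule sum.cong) auto

context mdp
begin

lemma mv_shift:
  assumes "i \<in> {1..d}" "\<And>j. j \<in> {1..d} \<Longrightarrow> u j = v j + c"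
  shows "mv d P0 u i = mv d P0 v i + c" and "mv d P1 u i = mv d P1 v i + c"
  using mv_cong[where u=u and v="\<lambda>j. v j + c", OF assms(2)] mv_const[OF st0 assms(1)] mv_const[OF st1 assms(1)]
  by auto

lemma omega_iff:
  assumes b: "bell (\<lambda>i. R0 i + nu) R1 g h" and i: "i \<in> {1..d}"
  shows "i \<in> omega d P0 P1 R0 R1 nu \<longleftrightarrow> R1 i + mv d P1 h i \<le> R0 i + nu + mv d P0 h i"
proof
  assume "i \<in> omega d P0 P1 R0 R1 nu"
  then obtain g' h' where b': "bellman_sol d P0 P1 R0 R1 nu g' h'"
    and ge: "R0 i + nu + mv d P0 h' i \<ge> R1 i + mv d P1 h' i"
    unfolding omega_def mv_def by auto
  have b'': "bell (\<lambda>i. R0 i + nu) R1 g' h'" using b' bs_bell by simp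
  obtain c where c: "\<forall>j\<in>{1..d}. h' j = h j + c" using bell_unique(2)[OF b'' b] by auto
  show "R1 i + mv d P1 h i \<le> R0 i + nu + mv d P0 h i"
    using ge mv_shift[OF i, of h' h c] c by auto
next
  assume "R1 i + mv d P1 h i \<le> R0 i + nu + mv d P0 h i"
  then show "i \<in> omega d P0 P1 R0 R1 nu"
    unfolding omega_def using i b bs_bell[of R0 R1 nu g h] unfolding mv_def by auto
qed

lemma pol0: "pol_matrix P0 P1 (\<lambda>_. 0) = P0" unfolding pol_matrix_def by simp
lemma pol1: "pol_matrix P0 P1 (\<lambda>_. 1) = P1" unfolding pol_matrix_def by simp
lemma policy0: "policy d (\<lambda>_. 0)" unfolding policy_def by simp
lemma policy1: "policy d (\<lambda>_. 1)" unfolding policy_def by simp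

lemma om_ne:
  assumes i: "i \<in> {1..d}"
  shows "{nu. i \<in> omega d P0 P1 R0 R1 nu} \<noteq> {}"
proof -
  have z: "1 \<in> {1..d}" using d1 by auto
  obtain g0 h0 where ev: "\<forall>i\<in>{1..d}. g0 + h0 i = R0 i + mv d P0 h0 i"
    using eval_exists[OF st0, of 1 R0] Qp_sc[OF policy0] z unfolding pol0 by blast
  define K where "K = (\<Sum>i=1..d. \<bar>R1 i + mv d P1 h0 i - (R0 i + mv d P0 h0 i)\<bar>)"
  have Kle: "R1 j + mv d P1 h0 j \<le> R0 j + K + mv d P0 h0 j" if j: "j \<in> {1..d}" for j
  proof -
    have "\<bar>R1 j + mv d P1 h0 j - (R0 j + mv d P0 h0 j)\<bar> \<le> K"
      unfolding K_def by (rule member_le_sum) (use j in auto)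
    then show ?thesis by simp
  qed
  have "bell (\<lambda>i. R0 i + K) R1 (g0 + K) h0"
    unfolding bell_def
  proof
    fix j assume j: "j \<in> {1..d}"
    show "g0 + K + h0 j = max (R0 j + K + mv d P0 h0 j) (R1 j + mv d P1 h0 j)"
      using ev j Kle[OF j] by (simp add: max_def)
  qed
  then have "i \<in> omega d P0 P1 R0 R1 K" using omega_iff i Kle[OF i] by blast
  then show ?thesis by auto
qed

lemma om_bdd:
  assumes i: "i \<in> {1..d}"
  shows "bdd_below {nu. i \<in> omega d P0 P1 R0 R1 nu}"
proof -
  have z: "1 \<in> {1..d}" using d1 by auto
  obtain g1 h1 where ev: "\<forall>i\<in>{1..d}. g1 + h1 i = R1 i + mv d P1 h1 i"
    using eval_exists[OF st1, of 1 R1] Qp_sc[OF policy1] z unfolding pol1 by blast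
  define K where "K = (\<Sum>i=1..d. \<bar>R0 i + mv d P0 h1 i - (R1 i + mv d P1 h1 i)\<bar>)"
  have Kle: "R0 j + mv d P0 h1 j \<le> R1 j + K + mv d P1 h1 j" if j: "j \<in> {1..d}" for j
  proof -
    have "\<bar>R0 j + mv d P0 h1 j - (R1 j + mv d P1 h1 j)\<bar> \<le> K"
      unfolding K_def by (rule member_le_sum) (use j in auto)
    then show ?thesis by simp
  qed
  show ?thesis
  proof (rule bdd_belowI)
    fix nu assume nu: "nu \<in> {nu. i \<in> omega d P0 P1 R0 R1 nu}"
    show "- K \<le> nu"
    proof (rule ccontr)
      assume "\<not> - K \<le> nu"
      then have lt: "nu < - K" by simp
      have strict: "R0 j + nu + mv d P0 h1 j < R1 j + mv d P1 h1 j" if j: "j \<in> {1..d}" for j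
        using Kle[OF j] lt by simp
      have "bell (\<lambda>i. R0 i + nu) R1 g1 h1"
        unfolding bell_def
      proof
        fix j assume j: "j \<in> {1..d}"
        show "g1 + h1 j = max (R0 j + nu + mv d P0 h1 j) (R1 j + mv d P1 h1 j)"
          using ev j strict[OF j] by (simp add: max_def)
      qed
      then have "i \<notin> omega d P0 P1 R0 R1 nu" using omega_iff i strict[OF i] by auto
      then show False using nu by simp
    qed
  qed
qed

lemma W_le:
  assumes i: "i \<in> {1..d}" and om: "i \<in> omega d P0 P1 R0 R1 nu"
  shows "whittle_index d P0 P1 R0 R1 i \<le> nu"
  unfolding whittle_index_def by (rule cInf_lower) (use om om_bdd[OF i] in auto)

lemma W_less:
  assumes i: "i \<in> {1..d}" and idx: "indexable d P0 P1 R0 R1"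
    and lt: "whittle_index d P0 P1 R0 R1 i < nu"
  shows "i \<in> omega d P0 P1 R0 R1 nu"
proof -
  obtain x where x: "i \<in> omega d P0 P1 R0 R1 x" "x < nu"
    using cInf_lessD[OF om_ne[OF i] lt[unfolded whittle_index_def]] by auto
  have "omega d P0 P1 R0 R1 x \<subseteq> omega d P0 P1 R0 R1 nu"
    using idx x(2) unfolding indexable_def by auto
  then show ?thesis using x(1) by auto
qed

lemma limit_bell:
  assumes s: "s \<in> {1..d}" and e: "\<bar>e\<bar> = 1"
    and seq: "\<And>n. \<exists>g h. bell (\<lambda>i. R0 i + (x + e / real (Suc n))) R1 g h \<and>
        sg * (R0 s + (x + e / real (Suc n)) + mv d P0 h s - R1 s - mv d P1 h s) \<le> 0"
  shows "\<exists>g h. bell (\<lambda>i. R0 i + x) R1 g h \<and> sg * (R0 s + x + mv d P0 h s - R1 s - mv d P1 h s) \<le> 0"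
proof -
  define DP where "DP = detpol d"
  have z: "1 \<in> {1..d}" using d1 by auto
  define EV where "EV \<sigma> f = (SOME gh. \<forall>i\<in>{1..d}. fst gh + snd gh i = f i + mv d (Qp \<sigma>) (snd gh) i)"
    for \<sigma> and f :: "nat \<Rightarrow> real"
  have EVok: "\<forall>i\<in>{1..d}. fst (EV \<sigma> f) + snd (EV \<sigma> f) i = f i + mv d (Qp \<sigma>) (snd (EV \<sigma> f)) i"
    if s: "\<sigma> \<in> DP" for \<sigma> f
  proof -
    have p: "policy d \<sigma>" using s detpol_policy unfolding DP_def by auto
    obtain g h where "\<forall>i\<in>{1..d}. g + h i = f i + mv d (Qp \<sigma>) h i"
      using eval_exists[OF Qp_stoch[OF p] Qp_sc[OF p] z, of f] by auto
    then have "\<exists>gh. \<forall>i\<in>{1..d}. fst gh + snd gh i = f i + mv d (Qp \<sigma>) (snd gh) i"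
      by (intro exI[of _ "(g, h)"]) simp
    then show ?thesis unfolding EV_def by (rule someI_ex)
  qed
  define a1 where "a1 \<sigma> = fst (EV \<sigma> (pol_reward R0 R1 \<sigma>))" for \<sigma>
  define H1 where "H1 \<sigma> = snd (EV \<sigma> (pol_reward R0 R1 \<sigma>))" for \<sigma>
  define a2 where "a2 \<sigma> = fst (EV \<sigma> (\<lambda>i. 1 - \<sigma> i))" for \<sigma>
  define H2 where "H2 \<sigma> = snd (EV \<sigma> (\<lambda>i. 1 - \<sigma> i))" for \<sigma>
  define gf where "gf \<sigma> \<nu> = a1 \<sigma> + \<nu> * a2 \<sigma>" for \<sigma> \<nu>
  define hf where "hf \<sigma> \<nu> = (\<lambda>j. H1 \<sigma> j + \<nu> * H2 \<sigma> j)" for \<sigma> \<nu>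
  have famEq: "gf \<sigma> \<nu> + hf \<sigma> \<nu> i = pol_reward (\<lambda>i. R0 i + \<nu>) R1 \<sigma> i + mv d (Qp \<sigma>) (hf \<sigma> \<nu>) i"
    if s: "\<sigma> \<in> DP" and i: "i \<in> {1..d}" for \<sigma> \<nu> i
  proof -
    have e1: "a1 \<sigma> + H1 \<sigma> i = pol_reward R0 R1 \<sigma> i + mv d (Qp \<sigma>) (H1 \<sigma>) i"
      using EVok[OF s] i unfolding a1_def H1_def by auto
    have e2: "a2 \<sigma> + H2 \<sigma> i = (1 - \<sigma> i) + mv d (Qp \<sigma>) (H2 \<sigma>) i"
      using EVok[OF s] i unfolding a2_def H2_def by auto
    have pr: "pol_reward (\<lambda>i. R0 i + \<nu>) R1 \<sigma> i = pol_reward R0 R1 \<sigma> i + \<nu> * (1 - \<sigma> i)"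
      unfolding pol_reward_def by (simp add: algebra_simps)
    have e2': "\<nu> * a2 \<sigma> + \<nu> * H2 \<sigma> i = \<nu> * (1 - \<sigma> i) + \<nu> * mv d (Qp \<sigma>) (H2 \<sigma>) i"
      using arg_cong[OF e2, of "\<lambda>z. \<nu> * z"] by (simp add: distrib_left)
    show ?thesis unfolding gf_def hf_def mv_lin pr using e1 e2' by linarith
  qed
  define F where "F \<sigma> k \<nu> = (case k of (i, t) \<Rightarrow>
      if t = (0::nat) then R0 i + \<nu> + mv d P0 (hf \<sigma> \<nu>) i - gf \<sigma> \<nu> - hf \<sigma> \<nu> i
      else if t = 1 then R1 i + mv d P1 (hf \<sigma> \<nu>) i - gf \<sigma> \<nu> - hf \<sigma> \<nu> i
      else sg * (R0 s + \<nu> + mv d P0 (hf \<sigma> \<nu>) s - R1 s - mv d P1 (hf \<sigma> \<nu>) s))" for \<sigma> k \<nu>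
  define K where "K = {1..d} \<times> {0::nat, 1, 2}"
  have finK: "finite K" unfolding K_def by auto
  have aff: "\<exists>a b. \<forall>\<nu>. F \<sigma> k \<nu> = a + \<nu> * b" for \<sigma> k
  proof (cases k)
    case (Pair i t)
    consider "t = 0" | "t = 1" | "t \<noteq> 0" "t \<noteq> 1" by auto
    then show ?thesis
    proof cases
      case 1
      show ?thesis
        by (rule exI[of _ "R0 i + mv d P0 (H1 \<sigma>) i - a1 \<sigma> - H1 \<sigma> i"],
            rule exI[of _ "1 + mv d P0 (H2 \<sigma>) i - a2 \<sigma> - H2 \<sigma> i"])
           (simp add: F_def Pair 1 hf_def gf_def mv_lin algebra_simps)
    next
      case 2
      show ?thesis
        by (rule exI[of _ "R1 i + mv d P1 (H1 \<sigma>) i - a1 \<sigma> - H1 \<sigma> i"],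
            rule exI[of _ "mv d P1 (H2 \<sigma>) i - a2 \<sigma> - H2 \<sigma> i"])
           (simp add: F_def Pair 2 hf_def gf_def mv_lin algebra_simps)
    next
      case 3
      have t1: "t \<noteq> Suc 0" using 3 by simp
      show ?thesis
        by (rule exI[of _ "sg * (R0 s + mv d P0 (H1 \<sigma>) s - R1 s - mv d P1 (H1 \<sigma>) s)"],
            rule exI[of _ "sg * (1 + mv d P0 (H2 \<sigma>) s - mv d P1 (H2 \<sigma>) s)"])
           (simp add: F_def Pair 3 t1 hf_def gf_def mv_lin algebra_simps)
    qed
  qed
  have seq': "\<exists>\<sigma>\<in>DP. \<forall>k\<in>K. F \<sigma> k (x + e / real (Suc n)) \<le> 0" for n
  proof -
    define \<nu> where "\<nu> = x + e / real (Suc n)"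
    obtain g h where b: "bell (\<lambda>i. R0 i + \<nu>) R1 g h"
      and ds: "sg * (R0 s + \<nu> + mv d P0 h s - R1 s - mv d P1 h s) \<le> 0"
      using seq[of n] unfolding \<nu>_def by auto
    define \<sigma> where "\<sigma> = amax (\<lambda>i. R0 i + \<nu>) R1 h"
    have sDP: "\<sigma> \<in> DP" unfolding \<sigma>_def DP_def by (rule amax_det)
    have p: "policy d \<sigma>" using sDP detpol_policy unfolding DP_def by auto
    define \<delta> where "\<delta> j = hf \<sigma> \<nu> j - h j" for j
    have kd: "(gf \<sigma> \<nu> - g) + \<delta> i = mv d (Qp \<sigma>) \<delta> i" if i: "i \<in> {1..d}" for i
      using famEq[OF sDP i, of \<nu>] amax_eq[OF b i] unfolding \<sigma>_def[symmetric] \<delta>_def mv_diff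
      by simp
    have gg: "gf \<sigma> \<nu> - g = 0" using kernel_const(1)[OF Qp_stoch[OF p] Qp_sc[OF p] d1 kd] .
    have hh: "hf \<sigma> \<nu> j = h j + \<delta> 1" if j: "j \<in> {1..d}" for j
      using kernel_const(2)[OF Qp_stoch[OF p] Qp_sc[OF p] d1 kd j z] unfolding \<delta>_def by simp
    have "\<forall>k\<in>K. F \<sigma> k \<nu> \<le> 0"
    proof
      fix k assume k: "k \<in> K"
      then obtain i t where kk: "k = (i, t)" and i: "i \<in> {1..d}" and t: "t \<in> {0,1,2}"
        unfolding K_def by auto
      have m0: "mv d P0 (hf \<sigma> \<nu>) j = mv d P0 h j + \<delta> 1"
        and m1: "mv d P1 (hf \<sigma> \<nu>) j = mv d P1 h j + \<delta> 1" if "j \<in> {1..d}" for j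
        using mv_shift[OF that hh] by auto
      have bi: "g + h i = max (R0 i + \<nu> + mv d P0 h i) (R1 i + mv d P1 h i)"
        using b i unfolding bell_def by auto
      show "F \<sigma> k \<nu> \<le> 0"
        using t bi ds gg m0[OF i] m1[OF i] m0[OF s] m1[OF s] hh[OF i]
        unfolding F_def kk by (auto simp: algebra_simps)
    qed
    then show ?thesis using sDP unfolding \<nu>_def by blast
  qed
  obtain \<sigma> where sDP: "\<sigma> \<in> DP" and Fx: "\<forall>k\<in>K. F \<sigma> k x \<le> 0"
    using affine_limit[of DP K F e x] detpol_finite finK aff e seq' unfolding DP_def by blast
  have \<sigma>01: "\<sigma> i = 0 \<or> \<sigma> i = 1" for i using sDP detpol_01 unfolding DP_def by blast
  show ?thesis
  proof (intro exI conjI)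
    show "bell (\<lambda>i. R0 i + x) R1 (gf \<sigma> x) (hf \<sigma> x)"
      unfolding bell_def
    proof
      fix i assume i: "i \<in> {1..d}"
      have c0: "F \<sigma> (i, 0) x \<le> 0" and c1: "F \<sigma> (i, 1) x \<le> 0" using Fx i unfolding K_def by auto
      have v: "gf \<sigma> x + hf \<sigma> x i = (if \<sigma> i = 1 then R1 i + mv d P1 (hf \<sigma> x) i
                 else R0 i + x + mv d P0 (hf \<sigma> x) i)"
        using famEq[OF sDP i, of x] comb_det[where \<sigma>=\<sigma> and i=i, OF \<sigma>01] by simp
      show "gf \<sigma> x + hf \<sigma> x i = max (R0 i + x + mv d P0 (hf \<sigma> x) i) (R1 i + mv d P1 (hf \<sigma> x) i)"
        using c0 c1 v unfolding F_def by (auto simp: max_def split: if_splits)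
    qed
    have "F \<sigma> (s, 2) x \<le> 0" using Fx s unfolding K_def by auto
    then show "sg * (R0 s + x + mv d P0 (hf \<sigma> x) s - R1 s - mv d P1 (hf \<sigma> x) s) \<le> 0"
      unfolding F_def by simp
  qed
qed

end


section \<open>Structured Bellman solution at the Whittle index\<close>

context mdp
begin

lemma struct_sol:
  assumes idx: "indexable d P0 P1 R0 R1" and s: "s \<in> {1..d}"
    and ord: "\<forall>i\<in>{1..d}. \<forall>j\<in>{1..d}. i < j \<longrightarrow> whittle_index d P0 P1 R0 R1 i > whittle_index d P0 P1 R0 R1 j"
  shows "\<exists>g h. bell (\<lambda>i. R0 i + whittle_index d P0 P1 R0 R1 s) R1 g h \<and>
     (\<forall>i\<in>{1..d}. i < s \<longrightarrow> R0 i + whittle_index d P0 P1 R0 R1 s + mv d P0 h i \<le> R1 i + mv d P1 h i) \<and>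
     (\<forall>i\<in>{1..d}. s < i \<longrightarrow> R1 i + mv d P1 h i \<le> R0 i + whittle_index d P0 P1 R0 R1 s + mv d P0 h i) \<and>
     R0 s + whittle_index d P0 P1 R0 R1 s + mv d P0 h s = R1 s + mv d P1 h s"
proof -
  define W where "W = whittle_index d P0 P1 R0 R1"
  define x where "x = W s"
  have A: "\<exists>g h. bell (\<lambda>i. R0 i + x) R1 g h \<and> 1 * (R0 s + x + mv d P0 h s - R1 s - mv d P1 h s) \<le> 0"
  proof (rule limit_bell[OF s])
    show "\<bar>-1::real\<bar> = 1" by simp
    fix n
    define \<nu> where "\<nu> = x + -1 / real (Suc n)"
    have lt: "\<nu> < x" unfolding \<nu>_def by simp
    obtain g h where b: "bell (\<lambda>i. R0 i + \<nu>) R1 g h" using bell_exists by blast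
    have "s \<notin> omega d P0 P1 R0 R1 \<nu>" using W_le[OF s] lt unfolding x_def W_def by force
    then have "R0 s + \<nu> + mv d P0 h s < R1 s + mv d P1 h s" using omega_iff[OF b s] by simp
    then have lt2: "1 * (R0 s + \<nu> + mv d P0 h s - R1 s - mv d P1 h s) \<le> 0" by simp
    show "\<exists>g h. bell (\<lambda>i. R0 i + (x + -1 / real (Suc n))) R1 g h \<and>
        1 * (R0 s + (x + -1 / real (Suc n)) + mv d P0 h s - R1 s - mv d P1 h s) \<le> 0"
      using b lt2 unfolding \<nu>_def by blast
  qed
  then obtain g1 h1 where b1: "bell (\<lambda>i. R0 i + x) R1 g1 h1"
    and d1': "R0 s + x + mv d P0 h1 s - R1 s - mv d P1 h1 s \<le> 0" by auto
  have B: "\<exists>g h. bell (\<lambda>i. R0 i + x) R1 g h \<and> -1 * (R0 s + x + mv d P0 h s - R1 s - mv d P1 h s) \<le> 0"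
  proof (rule limit_bell[OF s])
    show "\<bar>1::real\<bar> = 1" by simp
    fix n
    define \<nu> where "\<nu> = x + 1 / real (Suc n)"
    have lt: "x < \<nu>" unfolding \<nu>_def by simp
    obtain g h where b: "bell (\<lambda>i. R0 i + \<nu>) R1 g h" using bell_exists by blast
    have "s \<in> omega d P0 P1 R0 R1 \<nu>" using W_less[OF s idx] lt unfolding x_def W_def by force
    then have "R1 s + mv d P1 h s \<le> R0 s + \<nu> + mv d P0 h s" using omega_iff[OF b s] by simp
    then have lt2: "-1 * (R0 s + \<nu> + mv d P0 h s - R1 s - mv d P1 h s) \<le> 0" by simp
    show "\<exists>g h. bell (\<lambda>i. R0 i + (x + 1 / real (Suc n))) R1 g h \<and>
        -1 * (R0 s + (x + 1 / real (Suc n)) + mv d P0 h s - R1 s - mv d P1 h s) \<le> 0"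
      using b lt2 unfolding \<nu>_def by blast
  qed
  then obtain g2 h2 where b2: "bell (\<lambda>i. R0 i + x) R1 g2 h2"
    and d2': "0 \<le> R0 s + x + mv d P0 h2 s - R1 s - mv d P1 h2 s" by auto
  obtain c where c: "\<forall>j\<in>{1..d}. h1 j = h2 j + c" using bell_unique(2)[OF b1 b2] by auto
  have "mv d P0 h1 s = mv d P0 h2 s + c" "mv d P1 h1 s = mv d P1 h2 s + c"
    using mv_shift[OF s, of h1 h2 c] c by auto
  then have eqs: "R0 s + x + mv d P0 h1 s = R1 s + mv d P1 h1 s" using d1' d2' by simp
  have lo: "R0 i + x + mv d P0 h1 i \<le> R1 i + mv d P1 h1 i" if i: "i \<in> {1..d}" "i < s" for i
  proof -
    have "W s < W i" using ord i s unfolding W_def by auto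
    then have "i \<notin> omega d P0 P1 R0 R1 x" using W_le[OF i(1)] unfolding x_def W_def by force
    then show ?thesis using omega_iff[OF b1 i(1)] by simp
  qed
  have hi: "R1 i + mv d P1 h1 i \<le> R0 i + x + mv d P0 h1 i" if i: "i \<in> {1..d}" "s < i" for i
  proof -
    have "W i < W s" using ord i s unfolding W_def by auto
    then have "i \<in> omega d P0 P1 R0 R1 x" using W_less[OF i(1) idx] unfolding x_def W_def by force
    then show ?thesis using omega_iff[OF b1 i(1)] by simp
  qed
  show ?thesis using b1 lo hi eqs unfolding x_def W_def by blast
qed

end

lemma sum_split3:
  fixes f :: "nat \<Rightarrow> real"
  assumes "1 \<le> s" "s \<le> d"
  shows "(\<Sum>i=1..d. f i) = (\<Sum>i=1..<s. f i) + f s + (\<Sum>i=Suc s..d. f i)"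
proof -
  have e1: "{1..d} = {1..<s} \<union> {s..d}" using assms by auto
  have e2: "{s..d} = insert s {Suc s..d}" using assms by auto
  have "(\<Sum>i=1..d. f i) = (\<Sum>i=1..<s. f i) + (\<Sum>i=s..d. f i)"
    unfolding e1 by (rule sum.union_disjoint) auto
  also have "(\<Sum>i=s..d. f i) = f s + (\<Sum>i=Suc s..d. f i)" unfolding e2 by simp
  finally show ?thesis by simp
qed

lemma sum_upto_s:
  fixes f :: "nat \<Rightarrow> real"
  assumes "1 \<le> s"
  shows "(\<Sum>i=1..s. f i) = (\<Sum>i=1..<s. f i) + f s"
proof -
  have "{1..s} = insert s {1..<s}" using assms by auto
  then show ?thesis by simp
qed

lemma simplex_d1: "m \<in> simplex d \<Longrightarrow> 1 \<le> d"
  unfolding simplex_def by (cases d) auto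

lemma simplex_nn: "m \<in> simplex d \<Longrightarrow> i \<in> {1..d} \<Longrightarrow> 0 \<le> m i"
  unfolding simplex_def by auto

lemma psum_mono:
  assumes m: "m \<in> simplex d" and ab: "a < b" and b: "b \<le> d"
  shows "(\<Sum>i=1..a. m i) \<le> (\<Sum>i=1..<b. m i)"
  by (rule sum_mono2) (use ab b simplex_nn[OF m] in auto)

lemma s_of_props:
  assumes m: "m \<in> simplex d" and a0: "0 < alpha" and a1: "alpha < 1"
  shows "s_of d alpha m \<in> {1..d} \<and> (\<Sum>i=1..<s_of d alpha m. m i) \<le> alpha
     \<and> alpha < (\<Sum>i=1..s_of d alpha m. m i)"
proof -
  define P where "P s \<longleftrightarrow> s \<in> {1..d} \<and> (\<Sum>i=1..<s. m i) \<le> alpha \<and> alpha < (\<Sum>i=1..s. m i)" for s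
  have tot: "(\<Sum>i=1..d. m i) = 1" using m unfolding simplex_def by auto
  define s0 where "s0 = (LEAST k. alpha < (\<Sum>i=1..k. m i))"
  have ex: "alpha < (\<Sum>i=1..d. m i)" using tot a1 by simp
  have s0a: "alpha < (\<Sum>i=1..s0. m i)" unfolding s0_def by (rule LeastI[of _ d], rule ex)
  have s0d: "s0 \<le> d" unfolding s0_def by (rule Least_le, rule ex)
  have s0pos: "s0 \<noteq> 0"
  proof
    assume "s0 = 0"
    then have "(\<Sum>i=1..s0. m i) = 0" by simp
    then show False using s0a a0 by simp
  qed
  have lt: "s0 - 1 < s0" using s0pos by simp
  have "\<not> alpha < (\<Sum>i=1..s0 - 1. m i)"
    using not_less_Least[of "s0 - 1" "\<lambda>k. alpha < (\<Sum>i=1..k. m i)"] lt unfolding s0_def by blast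
  moreover have "{1..<s0} = {1..s0 - 1}" using s0pos by (cases s0) (simp_all add: atLeastLessThanSuc_atLeastAtMost)
  ultimately have "(\<Sum>i=1..<s0. m i) \<le> alpha" by simp
  then have Ps0: "P s0" unfolding P_def using s0a s0d s0pos by auto
  have uniq: "s = s0" if "P s" for s
  proof (rule ccontr)
    assume ne: "s \<noteq> s0"
    show False
    proof (cases "s < s0")
      case True
      have "(\<Sum>i=1..s. m i) \<le> (\<Sum>i=1..<s0. m i)" by (rule psum_mono[OF m True s0d])
      moreover have "alpha < (\<Sum>i=1..s. m i)" using that unfolding P_def by blast
      moreover have "(\<Sum>i=1..<s0. m i) \<le> alpha" using Ps0 unfolding P_def by blast
      ultimately show False by linarith
    next
      case False
      then have lt: "s0 < s" using ne by simp
      have "(\<Sum>i=1..s0. m i) \<le> (\<Sum>i=1..<s. m i)" by (rule psum_mono[OF m lt]) (use that in \<open>auto simp: P_def\<close>)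
      moreover have "alpha < (\<Sum>i=1..s0. m i)" using Ps0 unfolding P_def by blast
      moreover have "(\<Sum>i=1..<s. m i) \<le> alpha" using that unfolding P_def by blast
      ultimately show False by linarith
    qed
  qed
  have "P (THE s. P s)" by (rule theI[of P s0, OF Ps0 uniq])
  moreover have "(THE s. P s) = s_of d alpha m" unfolding s_of_def P_def by simp
  ultimately show ?thesis unfolding P_def by simp
qed

lemma thr_sum:
  fixes X0 X1 :: "nat \<Rightarrow> real"
  assumes s: "1 \<le> s" "s \<le> d"
    and w: "\<And>i. i \<in> {1..d} \<Longrightarrow> w i = (if i < s then m i else if i = s then alpha - (\<Sum>j=1..<s. m j) else 0)"
  shows "(\<Sum>i=1..d. w i * X1 i + (m i - w i) * X0 i)
     = (\<Sum>i=1..<s. m i * X1 i) + (alpha - (\<Sum>i=1..<s. m i)) * X1 s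
       + ((\<Sum>i=1..s. m i) - alpha) * X0 s + (\<Sum>i=Suc s..d. m i * X0 i)"
proof -
  have "(\<Sum>i=1..d. w i * X1 i + (m i - w i) * X0 i)
     = (\<Sum>i=1..<s. w i * X1 i + (m i - w i) * X0 i) + (w s * X1 s + (m s - w s) * X0 s)
       + (\<Sum>i=Suc s..d. w i * X1 i + (m i - w i) * X0 i)"
    by (rule sum_split3[OF s])
  also have "(\<Sum>i=1..<s. w i * X1 i + (m i - w i) * X0 i) = (\<Sum>i=1..<s. m i * X1 i)"
    by (rule sum.cong) (use w s in auto)
  also have "(\<Sum>i=Suc s..d. w i * X1 i + (m i - w i) * X0 i) = (\<Sum>i=Suc s..d. m i * X0 i)"
    by (rule sum.cong) (use w s in auto)
  also have "w s = alpha - (\<Sum>j=1..<s. m j)" using w s by auto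
  finally show ?thesis using sum_upto_s[OF s(1), of m] by (simp add: algebra_simps)
qed

lemma mstat:
  fixes m :: "nat \<Rightarrow> real"
  assumes tot: "(\<Sum>i=1..d. m i) = 1"
    and stat: "\<And>j. j \<in> {1..d} \<Longrightarrow> (\<Sum>i=1..d. m i * Q i j) = m j"
    and ev: "\<And>i. i \<in> {1..d} \<Longrightarrow> g + h i = f i + mv d Q h i"
  shows "g = (\<Sum>i=1..d. m i * f i)"
proof -
  have "(\<Sum>i=1..d. m i * (g + h i)) = (\<Sum>i=1..d. m i * (f i + mv d Q h i))"
    by (rule sum.cong) (use ev in auto)
  moreover have "(\<Sum>i=1..d. m i * (g + h i)) = g + (\<Sum>i=1..d. m i * h i)"
    using tot by (simp add: distrib_left sum.distrib sum_distrib_right[symmetric])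
  moreover have "(\<Sum>i=1..d. m i * mv d Q h i) = (\<Sum>j=1..d. m j * h j)"
  proof -
    have "(\<Sum>i=1..d. m i * mv d Q h i) = (\<Sum>j=1..d. (\<Sum>i=1..d. m i * Q i j) * h j)"
      unfolding mv_def by (simp add: sum_distrib_left sum_distrib_right mult.assoc) (rule sum.swap)
    also have "\<dots> = (\<Sum>j=1..d. m j * h j)" by (rule sum.cong) (use stat in auto)
    finally show ?thesis .
  qed
  ultimately show ?thesis by (simp add: distrib_left sum.distrib)
qed


lemma wip_formula:
  assumes m: "m \<in> simplex d" and a0: "0 < alpha" and a1: "alpha < 1"
    and ord: "\<forall>i\<in>{1..d}. \<forall>j\<in>{1..d}. i < j \<longrightarrow> nu i > nu j"
  shows "wip_reward d nu R0 R1 alpha m =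
     (\<Sum>i=1..<s_of d alpha m. m i * R1 i) + (alpha - (\<Sum>i=1..<s_of d alpha m. m i)) * R1 (s_of d alpha m)
     + ((\<Sum>i=1..s_of d alpha m. m i) - alpha) * R0 (s_of d alpha m) + (\<Sum>i=Suc (s_of d alpha m)..d. m i * R0 i)"
proof -
  define s where "s = s_of d alpha m"
  define A where "A = (\<Sum>i=1..<s. m i)"
  have sp: "s \<in> {1..d}" "A \<le> alpha" "alpha < (\<Sum>i=1..s. m i)"
    using s_of_props[OF m a0 a1] unfolding s_def A_def by auto
  have sA: "(\<Sum>i=1..s. m i) = A + m s" unfolding A_def using sum_upto_s[of s m] sp by simp
  define w where "w i = (if i < s then m i else if i = s then alpha - A else 0)" for i
  have wa: "wip_active d nu alpha m i = w i" if i: "i \<in> {1..d}" for i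
  proof -
    have set: "{j\<in>{1..d}. nu j > nu i} = {1..<i}"
    proof (rule equalityI; rule subsetI)
      fix j assume j: "j \<in> {j\<in>{1..d}. nu j > nu i}"
      have "\<not> i \<le> j"
      proof
        assume "i \<le> j"
        then consider "i = j" | "i < j" by linarith
        then show False
        proof cases
          case 1 then show False using j by simp
        next
          case 2
          have jd: "j \<in> {1..d}" and gt: "nu j > nu i" using j by auto
          have "nu j < nu i" using ord i jd 2 by blast
          then show False using gt by simp
        qed
      qed
      then show "j \<in> {1..<i}" using j by auto
    next
      fix j assume j: "j \<in> {1..<i}"
      then show "j \<in> {j\<in>{1..d}. nu j > nu i}" using ord i by auto
    qed
    have nn: "0 \<le> m i" using simplex_nn[OF m i] .
    have wa': "wip_active d nu alpha m i = min (m i) (max 0 (alpha - (\<Sum>j=1..<i. m j)))"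
      unfolding wip_active_def set ..
    consider "i < s" | "i = s" | "s < i" by linarith
    then show ?thesis
    proof cases
      case 1
      have "(\<Sum>j=1..i. m j) \<le> A" unfolding A_def by (rule psum_mono[OF m 1]) (use sp in auto)
      moreover have "(\<Sum>j=1..i. m j) = (\<Sum>j=1..<i. m j) + m i" using sum_upto_s[of i m] i by simp
      ultimately show ?thesis unfolding wa' w_def using 1 sp nn by (simp add: min_def max_def)
    next
      case 2
      then show ?thesis unfolding wa' w_def using sp sA nn unfolding A_def by (simp add: min_def max_def)
    next
      case 3
      have "(\<Sum>j=1..s. m j) \<le> (\<Sum>j=1..<i. m j)" by (rule psum_mono[OF m 3]) (use i in auto)
      then show ?thesis unfolding wa' w_def using 3 sp nn by (simp add: min_def max_def)
    qed
  qed
  have "wip_reward d nu R0 R1 alpha m = (\<Sum>i=1..d. w i * R1 i + (m i - w i) * R0 i)"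
    unfolding wip_reward_def by (rule sum.cong) (auto simp: wa)
  also have "\<dots> = (\<Sum>i=1..<s. m i * R1 i) + (alpha - (\<Sum>i=1..<s. m i)) * R1 s
       + ((\<Sum>i=1..s. m i) - alpha) * R0 s + (\<Sum>i=Suc s..d. m i * R0 i)"
    by (rule thr_sum) (use sp in \<open>auto simp: w_def A_def\<close>)
  finally show ?thesis unfolding s_def .
qed

context mdp
begin

lemma part2:
  assumes idx: "indexable d P0 P1 R0 R1" and a0: "0 < alpha" and a1: "alpha < 1"
    and ord: "\<forall>i\<in>{1..d}. \<forall>j\<in>{1..d}. i < j \<longrightarrow> whittle_index d P0 P1 R0 R1 i > whittle_index d P0 P1 R0 R1 j"
    and m: "m \<in> simplex d" and fp: "\<forall>j\<in>{1..d}. phi d P0 P1 alpha m j = m j"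
  shows "wip_reward d (whittle_index d P0 P1 R0 R1) R0 R1 alpha m = V_rel d P0 P1 R0 R1 alpha"
proof -
  define W where "W = whittle_index d P0 P1 R0 R1"
  define s where "s = s_of d alpha m"
  define A where "A = (\<Sum>i=1..<s. m i)"
  have sp: "s \<in> {1..d}" "A \<le> alpha" "alpha < (\<Sum>i=1..s. m i)"
    using s_of_props[OF m a0 a1] unfolding s_def A_def by auto
  have sA: "(\<Sum>i=1..s. m i) = A + m s" unfolding A_def using sum_upto_s[of s m] sp by simp
  have ms: "0 < m s" using sp sA by simp
  have tot: "(\<Sum>i=1..d. m i) = 1" using m unfolding simplex_def by auto
  define p where "p = (alpha - A) / m s"
  have p01: "0 \<le> p" "p \<le> 1" using sp sA ms unfolding p_def by (auto simp: field_simps)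
  have msp: "m s * p = alpha - A" unfolding p_def using ms by simp
  define pol where "pol i = (if i < s then 1 else if i = s then p else 0)" for i
  have ppol: "policy d pol" unfolding policy_def pol_def using p01 by auto
  define w where "w i = (if i < s then m i else if i = s then alpha - A else 0)" for i
  define rhs where "rhs X0 X1 = (\<Sum>i=1..<s. m i * X1 i) + (alpha - (\<Sum>i=1..<s. m i)) * X1 s
       + ((\<Sum>i=1..s. m i) - alpha) * X0 s + (\<Sum>i=Suc s..d. m i * X0 i)" for X0 X1 :: "nat \<Rightarrow> real"
  have thr: "(\<Sum>i=1..d. m i * ((1 - pol i) * X0 i + pol i * X1 i)) = rhs X0 X1" for X0 X1
  proof -
    have "(\<Sum>i=1..d. m i * ((1 - pol i) * X0 i + pol i * X1 i)) = (\<Sum>i=1..d. w i * X1 i + (m i - w i) * X0 i)"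
    proof (rule sum.cong)
      fix i assume "i \<in> {1..d}"
      have "m i * pol i = w i" unfolding pol_def w_def using msp by auto
      then show "m i * ((1 - pol i) * X0 i + pol i * X1 i) = w i * X1 i + (m i - w i) * X0 i"
        by (simp add: algebra_simps)
    qed simp
    also have "\<dots> = rhs X0 X1" unfolding rhs_def
    proof (rule thr_sum)
      fix i assume "i \<in> {1..d}"
      show "w i = (if i < s then m i else if i = s then alpha - (\<Sum>j=1..<s. m j) else 0)"
        unfolding w_def A_def by simp
    qed (use sp in auto)
    finally show ?thesis .
  qed
  define rho where "rho = rhs R0 R1"
  have rho_eq: "wip_reward d W R0 R1 alpha m = rho"
    unfolding rho_def rhs_def s_def W_def by (rule wip_formula[OF m a0 a1 ord])
  have stat: "(\<Sum>i=1..d. m i * Qp pol i j) = m j" if j: "j \<in> {1..d}" for j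
  proof -
    have "(\<Sum>i=1..d. m i * Qp pol i j) = rhs (\<lambda>i. P0 i j) (\<lambda>i. P1 i j)"
      unfolding pol_matrix_def by (rule thr)
    also have "\<dots> = phi d P0 P1 alpha m j" unfolding phi_def Let_def rhs_def s_def ..
    finally show ?thesis using fp j by simp
  qed
  have act: "(\<Sum>i=1..d. m i * pol i) = alpha"
  proof -
    have "(\<Sum>i=1..d. m i * pol i) = rhs (\<lambda>i. 0) (\<lambda>i. 1)" using thr[of "\<lambda>i. 0" "\<lambda>i. 1"] by simp
    also have "\<dots> = alpha" unfolding rhs_def A_def by simp
    finally show ?thesis .
  qed
  have rew: "(\<Sum>i=1..d. m i * pol_reward R0 R1 pol i) = rho"
    unfolding rho_def pol_reward_def by (rule thr)
  obtain g h where b: "bell (\<lambda>i. R0 i + W s) R1 g h"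
    and lo: "\<forall>i\<in>{1..d}. i < s \<longrightarrow> R0 i + W s + mv d P0 h i \<le> R1 i + mv d P1 h i"
    and hi: "\<forall>i\<in>{1..d}. s < i \<longrightarrow> R1 i + mv d P1 h i \<le> R0 i + W s + mv d P0 h i"
    and eq: "R0 s + W s + mv d P0 h s = R1 s + mv d P1 h s"
    using struct_sol[OF idx sp(1) ord] unfolding W_def by blast
  define nu where "nu = W s"
  have stQ: "stochastic d (Qp pol)" using Qp_stoch[OF ppol] .
  have scQ: "single_recurrent_class d (Qp pol)" using Qp_sc[OF ppol] .
  have evs: "g + h i = pol_reward (\<lambda>i. R0 i + nu) R1 pol i + mv d (Qp pol) h i" if i: "i \<in> {1..d}" for i
  proof -
    have bi: "g + h i = max (R0 i + nu + mv d P0 h i) (R1 i + mv d P1 h i)"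
      using b i unfolding bell_def nu_def by auto
    consider "i < s" | "i = s" | "s < i" by linarith
    then show ?thesis
    proof cases
      case 1
      have "R0 i + W s + mv d P0 h i \<le> R1 i + mv d P1 h i" using lo i 1 by blast
      then show ?thesis using bi 1 unfolding comb pol_def nu_def by (simp add: max_def)
    next
      case 2 then show ?thesis using bi eq unfolding comb pol_def nu_def by (simp add: max_def algebra_simps)
    next
      case 3
      have "R1 i + mv d P1 h i \<le> R0 i + W s + mv d P0 h i" using hi i 3 by blast
      then show ?thesis using bi 3 unfolding comb pol_def nu_def by (simp add: max_def)
    qed
  qed
  have prnu: "pol_reward (\<lambda>i. R0 i + c) R1 q i = pol_reward R0 R1 q i + c * (1 - q i)" for c q i
    unfolding pol_reward_def by (simp add: algebra_simps)
  have gval: "g = rho + nu * (1 - alpha)"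
  proof -
    have "g = (\<Sum>i=1..d. m i * pol_reward (\<lambda>i. R0 i + nu) R1 pol i)"
      by (rule mstat[OF tot stat evs]) auto
    also have "\<dots> = (\<Sum>i=1..d. m i * pol_reward R0 R1 pol i) + nu * ((\<Sum>i=1..d. m i) - (\<Sum>i=1..d. m i * pol i))"
      unfolding prnu by (simp add: algebra_simps sum.distrib sum_subtractf sum_distrib_left)
    finally show ?thesis using rew tot act by simp
  qed
  have z: "1 \<in> {1..d}" using d1 by auto
  have lr_act: "longrun_avg d (Qp pol) pol 1 = alpha"
  proof -
    obtain g2 h2 where e2: "\<forall>i\<in>{1..d}. g2 + h2 i = pol i + mv d (Qp pol) h2 i"
      using eval_exists[OF stQ scQ z, of pol] by auto
    have "longrun_avg d (Qp pol) pol 1 = g2" by (rule longrun_eval[OF stQ z]) (use e2 in auto)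
    also have "g2 = (\<Sum>i=1..d. m i * pol i)" by (rule mstat[OF tot stat]) (use e2 in auto)
    finally show ?thesis using act by simp
  qed
  have lr_rew: "longrun_avg d (Qp pol) (pol_reward R0 R1 pol) 1 = rho"
  proof -
    obtain g2 h2 where e2: "\<forall>i\<in>{1..d}. g2 + h2 i = pol_reward R0 R1 pol i + mv d (Qp pol) h2 i"
      using eval_exists[OF stQ scQ z, of "pol_reward R0 R1 pol"] by auto
    have "longrun_avg d (Qp pol) (pol_reward R0 R1 pol) 1 = g2" by (rule longrun_eval[OF stQ z]) (use e2 in auto)
    also have "g2 = (\<Sum>i=1..d. m i * pol_reward R0 R1 pol i)" by (rule mstat[OF tot stat]) (use e2 in auto)
    finally show ?thesis using rew by simp
  qed
  define S where "S = {longrun_avg d (pol_matrix P0 P1 pol) (pol_reward R0 R1 pol) i0 | pol i0.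
            policy d pol \<and> i0 \<in> {1..d} \<and> longrun_avg d (pol_matrix P0 P1 pol) pol i0 = alpha}"
  have inS: "rho \<in> S" unfolding S_def using ppol z lr_act lr_rew by force
  have upper: "x \<le> rho" if xS: "x \<in> S" for x
  proof -
    obtain q i0 where x: "x = longrun_avg d (Qp q) (pol_reward R0 R1 q) i0" and pq: "policy d q"
      and i0: "i0 \<in> {1..d}" and fa: "longrun_avg d (Qp q) q i0 = alpha"
      using xS unfolding S_def by auto
    have stq: "stochastic d (Qp q)" using Qp_stoch[OF pq] .
    have scq: "single_recurrent_class d (Qp q)" using Qp_sc[OF pq] .
    obtain g1 h1 where e1: "\<forall>i\<in>{1..d}. g1 + h1 i = pol_reward R0 R1 q i + mv d (Qp q) h1 i"
      using eval_exists[OF stq scq z, of "pol_reward R0 R1 q"] by auto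
    obtain g2 h2 where e2: "\<forall>i\<in>{1..d}. g2 + h2 i = q i + mv d (Qp q) h2 i"
      using eval_exists[OF stq scq z, of q] by auto
    have xg: "x = g1" unfolding x by (rule longrun_eval[OF stq i0]) (use e1 in auto)
    have ag: "alpha = g2" unfolding fa[symmetric] by (rule longrun_eval[OF stq i0]) (use e2 in auto)
    define \<delta> where "\<delta> j = (h j - h1 j) + nu * h2 j" for j
    have H: "mv d (Qp q) \<delta> i \<le> (g - g1 - nu + nu * g2) + \<delta> i" if i: "i \<in> {1..d}" for i
    proof -
      have m1: "mv d (Qp q) \<delta> i = mv d (Qp q) h i - mv d (Qp q) h1 i + nu * mv d (Qp q) h2 i"
        unfolding \<delta>_def mv_lin[of d "Qp q" "\<lambda>j. h j - h1 j" nu h2 i] mv_diff ..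
      have sup: "pol_reward (\<lambda>i. R0 i + nu) R1 q i + mv d (Qp q) h i \<le> g + h i"
        using bell_super[OF b pq i] unfolding nu_def .
      have f1: "mv d (Qp q) h1 i = g1 + h1 i - pol_reward R0 R1 q i" using e1 i by auto
      have f2: "nu * mv d (Qp q) h2 i = nu * g2 + nu * h2 i - nu * q i"
        using arg_cong[OF e2[rule_format, OF i], of "\<lambda>z. nu * z"] by (simp add: algebra_simps)
      have f3: "pol_reward (\<lambda>i. R0 i + nu) R1 q i = pol_reward R0 R1 q i + nu - nu * q i"
        using prnu[of nu q i] by (simp add: algebra_simps)
      have f4: "\<delta> i = h i - h1 i + nu * h2 i" unfolding \<delta>_def ..
      show ?thesis using m1 sup f1 f2 f3 f4 by linarith
    qed
    have "0 \<le> g - g1 - nu + nu * g2" using min_principle(1)[OF stq d1 H] .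
    then show ?thesis using xg ag gval by (simp add: algebra_simps)
  qed
  have "V_rel d P0 P1 R0 R1 alpha = rho"
    unfolding V_rel_def S_def[symmetric] by (rule cSup_eq_maximum[OF inS upper])
  then show ?thesis using rho_eq unfolding W_def by simp
qed

end

theorem mainTheorem7:
  fixes d :: nat and P0 P1 :: "nat \<Rightarrow> nat \<Rightarrow> real" and R0 R1 :: "nat \<Rightarrow> real"
    and alpha :: real
  defines "\<nu> \<equiv> whittle_index d P0 P1 R0 R1"
  defines "\<rho> \<equiv> wip_reward d \<nu> R0 R1 alpha"
  assumes "stochastic d P0" and "stochastic d P1"
    and "0 < alpha" and "alpha < 1"
    and "unichain d P0 P1"
    and "strictly_indexable d P0 P1 R0 R1"
    and "\<forall>i\<in>{1..d}. \<forall>j\<in>{1..d}. i < j \<longrightarrow> \<nu> i > \<nu> j"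
  shows "(\<forall>m\<in>simplex d. \<rho> m =
            (let s = s_of d alpha m in
               (\<Sum>i=1..<s. m i * R1 i) + (alpha - (\<Sum>i=1..<s. m i)) * R1 s
               + ((\<Sum>i=1..s. m i) - alpha) * R0 s + (\<Sum>i=Suc s..d. m i * R0 i)))
       \<and> (\<forall>m\<in>simplex d. (\<forall>j\<in>{1..d}. phi d P0 P1 alpha m j = m j) \<longrightarrow>
            \<rho> m = V_rel d P0 P1 R0 R1 alpha)"
proof -
  have nu_def: "\<nu> = whittle_index d P0 P1 R0 R1" using assms(1) by simp
  have rho_def: "\<rho> = wip_reward d \<nu> R0 R1 alpha" using assms(2) by simp
  have ord: "\<forall>i\<in>{1..d}. \<forall>j\<in>{1..d}. i < j \<longrightarrow> \<nu> i > \<nu> j" using assms(9) .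
  have P1: "\<forall>m\<in>simplex d. \<rho> m =
            (let s = s_of d alpha m in
               (\<Sum>i=1..<s. m i * R1 i) + (alpha - (\<Sum>i=1..<s. m i)) * R1 s
               + ((\<Sum>i=1..s. m i) - alpha) * R0 s + (\<Sum>i=Suc s..d. m i * R0 i))"
  proof
    fix m assume m: "m \<in> simplex d"
    show "\<rho> m = (let s = s_of d alpha m in
               (\<Sum>i=1..<s. m i * R1 i) + (alpha - (\<Sum>i=1..<s. m i)) * R1 s
               + ((\<Sum>i=1..s. m i) - alpha) * R0 s + (\<Sum>i=Suc s..d. m i * R0 i))"
      unfolding rho_def Let_def by (rule wip_formula[OF m assms(5) assms(6) ord])
  qed
  have P2: "\<forall>m\<in>simplex d. (\<forall>j\<in>{1..d}. phi d P0 P1 alpha m j = m j) \<longrightarrow>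
            \<rho> m = V_rel d P0 P1 R0 R1 alpha"
  proof (intro ballI impI)
    fix m assume m: "m \<in> simplex d" and fp: "\<forall>j\<in>{1..d}. phi d P0 P1 alpha m j = m j"
    interpret mdp d P0 P1
      by unfold_locales (use assms(3,4,7) simplex_d1[OF m] in auto)
    have idx: "indexable d P0 P1 R0 R1" using assms(8) unfolding strictly_indexable_def by auto
    show "\<rho> m = V_rel d P0 P1 R0 R1 alpha"
      unfolding rho_def nu_def
      by (rule part2[OF idx assms(5) assms(6) ord[unfolded nu_def] m fp])
  qed
  show ?thesis using P1 P2 by blast
qed

end
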